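(* Let $(R,\mathfrak m)$ be a noetherian local ring, $\nu$ a valuation centered on $R$, and assume $I=\mathrm{Nil}(R)$ is the only associated prime ideal of $R$. Fix $n\ge1$ and take $y_1,\ldots,y_{r+s}\in I^n$ whose images generate $I^n/I^{n+1}$ as an $R_{\rm red}$-module. Let $b\in R\setminus I$ and let $\pi:R\to R^{(1)}$ be the local blowing up with respect to $\nu$ along $(b,y_1,\ldots,y_r)$, with $y_i^{(1)}=\pi(y_i)/b$ for $1\le i\le r$. If the images of $y_1,\ldots,y_r$ in $I^n/I^{n+1}$ are $R_{\rm red}$-linearly independent, then the images of $y_1^{(1)},\ldots,y_r^{(1)}$ in $I_{(1)}^n/I_{(1)}^{n+1}$ are $(R^{(1)})_{\rm red}$-linearly independent, where $I_{(1)}=\mathrm{Nil}(R^{(1)})$.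
   Context: All rings are commutative noetherian with $1$; $\mathrm{Nil}(A)$ is the nilradical of $A$ and $A_{\rm red}=A/\mathrm{Nil}(A)$. A valuation on a ring $R$ is a map $\nu:R\to\Gamma\cup\{\infty\}$ ($\Gamma$ an ordered abelian group) with $\nu(ab)=\nu(a)+\nu(b)$, $\nu(a+b)\ge\min\{\nu(a),\nu(b)\}$, $\nu(1)=0$, $\nu(0)=\infty$, whose support $\mathrm{supp}(\nu)=\{a:\nu(a)=\infty\}$ is a minimal prime ideal; it extends to localizations at multiplicative sets disjoint from the support via $\nu(a/s)=\nu(a)-\nu(s)$ and restricts to subrings, implicitly. $\nu$ has a center on $R$ if $\nu\ge0$ on $R$; its center is $\mathfrak C_\nu(R)=\{a:\nu(a)>0\}$. $\nu$ is centered on $(R,\mathfrak m)$ if $\nu\ge0$ on $R$ and $\nu>0$ on $\mathfrak m$. Local blowing up: for $b\in R\setminus\mathrm{supp}(\nu)$ let $J(b)=\bigcup_{i\ge1}\mathrm{ann}_R(b^i)$, so $R/J(b)\subseteq R_b$. Given $a_1,\ldots,a_r\in R$ with $\nu(a_i)\ge\nu(b)$, let $R'=(R/J(b))[a_1/b,\ldots,a_r/b]\subseteq R_b$ and $R^{(1)}=R'_{\mathfrak C_\nu(R')}$; the canonical map $R\to R^{(1)}$ is the local blowing up of $R$ with respect to $\nu$ along $(b,a_1,\ldots,a_r)$. (Here $\mathrm{supp}(\nu)=I$, $J(b)=0$, and $\nu(y_i)=\infty$ since $y_i$ is nilpotent.) *)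

theory Defs
  imports "HOL-Algebra.Ring_Divisibility" "HOL-Algebra.Ideal_Product" "HOL-Algebra.Generated_Rings"
    "HOL-Library.Extended"
begin

definition nilrad :: "('a, 'b) ring_scheme \<Rightarrow> 'a set" where
  "nilrad R = {a \<in> carrier R. \<exists>k::nat. a [^]\<^bsub>R\<^esub> k = \<zero>\<^bsub>R\<^esub>}"

definition ann :: "('a, 'b) ring_scheme \<Rightarrow> 'a \<Rightarrow> 'a set" where
  "ann R x = {a \<in> carrier R. a \<otimes>\<^bsub>R\<^esub> x = \<zero>\<^bsub>R\<^esub>}"

definition ass_primes :: "('a, 'b) ring_scheme \<Rightarrow> 'a set set" where
  "ass_primes R = {P. primeideal P R \<and> (\<exists>x \<in> carrier R. P = ann R x)}"

definition minimal_prime :: "('a, 'b) ring_scheme \<Rightarrow> 'a set \<Rightarrow> bool" where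
  "minimal_prime R P \<longleftrightarrow> primeideal P R \<and>
     (\<forall>Q. primeideal Q R \<and> Q \<subseteq> P \<longrightarrow> Q = P)"

definition local_ring :: "('a, 'b) ring_scheme \<Rightarrow> 'a set \<Rightarrow> bool" where
  "local_ring R m \<longleftrightarrow> cring R \<and> maximalideal m R \<and> (\<forall>J. maximalideal J R \<longrightarrow> J = m)"

fun ideal_pow :: "('a, 'b) ring_scheme \<Rightarrow> 'a set \<Rightarrow> nat \<Rightarrow> 'a set" where
  "ideal_pow R I 0 = carrier R"
| "ideal_pow R I (Suc k) = ideal_prod R I (ideal_pow R I k)"

text \<open>Values lie in \<Gamma> \<union> {\<infinity>}, modelled as the type 'g extended (Fin g | Pinf),
  with Minf excluded; Pinf plays the role of \<infinity>.\<close>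
definition valuation :: "('a, 'b) ring_scheme \<Rightarrow> ('a \<Rightarrow> 'g::linordered_ab_group_add extended) \<Rightarrow> bool" where
  "valuation R \<nu> \<longleftrightarrow>
     (\<forall>a \<in> carrier R. \<nu> a \<noteq> Minf) \<and>
     (\<forall>a \<in> carrier R. \<forall>c \<in> carrier R. \<nu> (a \<otimes>\<^bsub>R\<^esub> c) = \<nu> a + \<nu> c) \<and>
     (\<forall>a \<in> carrier R. \<forall>c \<in> carrier R. \<nu> (a \<oplus>\<^bsub>R\<^esub> c) \<ge> min (\<nu> a) (\<nu> c)) \<and>
     \<nu> \<one>\<^bsub>R\<^esub> = 0 \<and> \<nu> \<zero>\<^bsub>R\<^esub> = Pinf \<and>
     minimal_prime R {a \<in> carrier R. \<nu> a = Pinf}"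

definition centered_on :: "('a, 'b) ring_scheme \<Rightarrow> 'a set \<Rightarrow> ('a \<Rightarrow> 'g::linordered_ab_group_add extended) \<Rightarrow> bool" where
  "centered_on R m \<nu> \<longleftrightarrow> (\<forall>a \<in> carrier R. \<nu> a \<ge> 0) \<and> (\<forall>a \<in> m. \<nu> a > 0)"

definition loc_rel :: "('a, 'b) ring_scheme \<Rightarrow> 'a set \<Rightarrow> (('a \<times> 'a) \<times> ('a \<times> 'a)) set" where
  "loc_rel R M = {((a, s), (a', s')). a \<in> carrier R \<and> a' \<in> carrier R \<and> s \<in> M \<and> s' \<in> M \<and>
      (\<exists>t \<in> M. t \<otimes>\<^bsub>R\<^esub> ((a \<otimes>\<^bsub>R\<^esub> s') \<ominus>\<^bsub>R\<^esub> (a' \<otimes>\<^bsub>R\<^esub> s)) = \<zero>\<^bsub>R\<^esub>)}"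

definition frac :: "('a, 'b) ring_scheme \<Rightarrow> 'a set \<Rightarrow> 'a \<Rightarrow> 'a \<Rightarrow> ('a \<times> 'a) set" where
  "frac R M a s = loc_rel R M `` {(a, s)}"

definition loc_ring :: "('a, 'b) ring_scheme \<Rightarrow> 'a set \<Rightarrow> ('a \<times> 'a) set ring" where
  "loc_ring R M = \<lparr> carrier = {frac R M a s | a s. a \<in> carrier R \<and> s \<in> M},
     mult = (\<lambda>X Y. \<Union>{frac R M (fst p \<otimes>\<^bsub>R\<^esub> fst q) (snd p \<otimes>\<^bsub>R\<^esub> snd q) | p q. p \<in> X \<and> q \<in> Y}),
     one = frac R M \<one>\<^bsub>R\<^esub> \<one>\<^bsub>R\<^esub>,
     zero = frac R M \<zero>\<^bsub>R\<^esub> \<one>\<^bsub>R\<^esub>,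
     add = (\<lambda>X Y. \<Union>{frac R M ((fst p \<otimes>\<^bsub>R\<^esub> snd q) \<oplus>\<^bsub>R\<^esub> (fst q \<otimes>\<^bsub>R\<^esub> snd p)) (snd p \<otimes>\<^bsub>R\<^esub> snd q)
                        | p q. p \<in> X \<and> q \<in> Y}) \<rparr>"

definition powers :: "('a, 'b) ring_scheme \<Rightarrow> 'a \<Rightarrow> 'a set" where
  "powers R b = {b [^]\<^bsub>R\<^esub> (k::nat) | k. True}"

text \<open>R' = (R/J(b))[a_1/b,...,a_r/b], realised as the subring of R_b generated by the image
  of R and the fractions a/b, a \<in> A.\<close>
definition blowup_R' :: "('a, 'b) ring_scheme \<Rightarrow> 'a \<Rightarrow> 'a set \<Rightarrow> ('a \<times> 'a) set ring" where
  "blowup_R' R b A = (loc_ring R (powers R b)) \<lparr> carrier :=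
      generate_ring (loc_ring R (powers R b))
        ((\<lambda>x. frac R (powers R b) x \<one>\<^bsub>R\<^esub>) ` carrier R \<union> (\<lambda>a. frac R (powers R b) a b) ` A) \<rparr>"

definition blowup_center :: "('a, 'b) ring_scheme \<Rightarrow> ('a \<Rightarrow> 'g::linordered_ab_group_add extended)
     \<Rightarrow> 'a \<Rightarrow> 'a set \<Rightarrow> ('a \<times> 'a) set set" where
  "blowup_center R \<nu> b A = {X \<in> carrier (blowup_R' R b A).
      \<exists>a k. a \<in> carrier R \<and> (a, b [^]\<^bsub>R\<^esub> (k::nat)) \<in> X \<and> \<nu> (b [^]\<^bsub>R\<^esub> k) < \<nu> a}"

definition blowup_ring :: "('a, 'b) ring_scheme \<Rightarrow> ('a \<Rightarrow> 'g::linordered_ab_group_add extended)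
     \<Rightarrow> 'a \<Rightarrow> 'a set \<Rightarrow> (('a \<times> 'a) set \<times> ('a \<times> 'a) set) set ring" where
  "blowup_ring R \<nu> b A = loc_ring (blowup_R' R b A) (carrier (blowup_R' R b A) - blowup_center R \<nu> b A)"

definition blowup_map :: "('a, 'b) ring_scheme \<Rightarrow> ('a \<Rightarrow> 'g::linordered_ab_group_add extended)
     \<Rightarrow> 'a \<Rightarrow> 'a set \<Rightarrow> 'a \<Rightarrow> (('a \<times> 'a) set \<times> ('a \<times> 'a) set) set" where
  "blowup_map R \<nu> b A x = frac (blowup_R' R b A) (carrier (blowup_R' R b A) - blowup_center R \<nu> b A)
      (frac R (powers R b) x \<one>\<^bsub>R\<^esub>) \<one>\<^bsub>blowup_R' R b A\<^esub>"

definition blowup_quot :: "('a, 'b) ring_scheme \<Rightarrow> ('a \<Rightarrow> 'g::linordered_ab_group_add extended)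
     \<Rightarrow> 'a \<Rightarrow> 'a set \<Rightarrow> 'a \<Rightarrow> (('a \<times> 'a) set \<times> ('a \<times> 'a) set) set" where
  "blowup_quot R \<nu> b A a = frac (blowup_R' R b A) (carrier (blowup_R' R b A) - blowup_center R \<nu> b A)
      (frac R (powers R b) a b) \<one>\<^bsub>blowup_R' R b A\<^esub>"

end

theory Submission
  imports Defs
begin



locale locm = cring R for R (structure) +
  fixes M
  assumes M_sub: "M \<subseteq> carrier R" and M_one: "\<one> \<in> M"
    and M_mult: "\<lbrakk>s \<in> M; t \<in> M\<rbrakk> \<Longrightarrow> s \<otimes> t \<in> M"
begin

lemma Mc: "s \<in> M \<Longrightarrow> s \<in> carrier R" using M_sub by blast

lemma diff_zero_iff: "p \<in> carrier R \<Longrightarrow> q \<in> carrier R \<Longrightarrow> (p \<ominus> q = \<zero>) = (p = q)"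
proof
  assume c: "p \<in> carrier R" "q \<in> carrier R" and e: "p \<ominus> q = \<zero>"
  have h: "p = (p \<ominus> q) \<oplus> q" using c by algebra
  show "p = q" using h c unfolding e by simp
next
  assume c: "p \<in> carrier R" "q \<in> carrier R" and e: "p = q"
  show "p \<ominus> q = \<zero>" unfolding e using c by (simp add: minus_eq r_neg)
qed

lemma minus_zero_iff: "x \<in> carrier R \<Longrightarrow> y \<in> carrier R \<Longrightarrow> t \<in> carrier R \<Longrightarrow>
   (t \<otimes> (x \<ominus> y) = \<zero>) = (t \<otimes> x = t \<otimes> y)"
proof -
  assume c: "x \<in> carrier R" "y \<in> carrier R" "t \<in> carrier R"
  have e: "t \<otimes> (x \<ominus> y) = t \<otimes> x \<ominus> t \<otimes> y" using c by algebra
  show ?thesis unfolding e by (rule diff_zero_iff) (use c in simp_all)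
qed

lemma rel_iff: "((a,s),(a',s')) \<in> loc_rel R M \<longleftrightarrow> a \<in> carrier R \<and> a' \<in> carrier R \<and> s \<in> M \<and> s' \<in> M \<and>
   (\<exists>t\<in>M. t \<otimes> (a \<otimes> s') = t \<otimes> (a' \<otimes> s))"
proof (cases "a \<in> carrier R \<and> a' \<in> carrier R \<and> s \<in> M \<and> s' \<in> M")
  case True
  have h: "(\<exists>t\<in>M. t \<otimes> (a \<otimes> s' \<ominus> a' \<otimes> s) = \<zero>) = (\<exists>t\<in>M. t \<otimes> (a \<otimes> s') = t \<otimes> (a' \<otimes> s))"
  proof (rule bex_cong[OF refl])
    fix t assume "t \<in> M"
    then show "(t \<otimes> (a \<otimes> s' \<ominus> a' \<otimes> s) = \<zero>) = (t \<otimes> (a \<otimes> s') = t \<otimes> (a' \<otimes> s))"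
      by (rule_tac minus_zero_iff) (use True Mc in simp_all)
  qed
  show ?thesis using True h by (simp add: loc_rel_def)
next
  case False
  then show ?thesis by (auto simp: loc_rel_def)
qed

lemma rel_equiv: "equiv (carrier R \<times> M) (loc_rel R M)"
proof (rule equivI)
  show "loc_rel R M \<subseteq> (carrier R \<times> M) \<times> carrier R \<times> M"
      unfolding loc_rel_def by blast
  show "refl_on (carrier R \<times> M) (loc_rel R M)"
  proof (rule refl_onI)
    fix x assume x: "x \<in> carrier R \<times> M"
    obtain a s where xx: "x = (a,s)" by (cases x)
    have "\<one> \<otimes> (a \<otimes> s) = \<one> \<otimes> (a \<otimes> s)" by (rule refl)
    then show "(x,x) \<in> loc_rel R M" unfolding xx rel_iff using x xx M_one by blast
  qed
  show "sym (loc_rel R M)"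
  proof (rule symI)
    fix x y assume xy: "(x,y) \<in> loc_rel R M"
    obtain a s a' s' where xx: "x = (a,s)" "y = (a',s')" by (cases x, cases y)
    from xy obtain t where t: "t \<in> M" "t \<otimes> (a \<otimes> s') = t \<otimes> (a' \<otimes> s)"
      and c: "a \<in> carrier R" "a' \<in> carrier R" "s \<in> M" "s' \<in> M"
      unfolding xx rel_iff by blast
    have "t \<otimes> (a' \<otimes> s) = t \<otimes> (a \<otimes> s')" using t(2) by (rule sym)
    then show "(y,x) \<in> loc_rel R M" unfolding xx rel_iff using t(1) c by blast
  qed
  show "trans (loc_rel R M)"
  proof (rule transI)
    fix x y z assume xy: "(x,y) \<in> loc_rel R M" and yz: "(y,z) \<in> loc_rel R M"
    obtain a s a' s' a'' s'' where xyz: "x = (a,s)" "y = (a',s')" "z = (a'',s'')"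
      by (cases x, cases y, cases z) 
    from xy obtain t where t: "t \<in> M" "t \<otimes> (a \<otimes> s') = t \<otimes> (a' \<otimes> s)"
      and c1: "a \<in> carrier R" "a' \<in> carrier R" "s \<in> M" "s' \<in> M"
      unfolding xyz rel_iff by blast
    from yz obtain u where u: "u \<in> M" "u \<otimes> (a' \<otimes> s'') = u \<otimes> (a'' \<otimes> s')"
      and c2: "a'' \<in> carrier R" "s'' \<in> M"
      unfolding xyz rel_iff by blast
    note e1 = t(2) and e2 = u(2)
    have cc: "s \<in> carrier R" "s' \<in> carrier R" "s'' \<in> carrier R" "t \<in> carrier R" "u \<in> carrier R"
      using c1 c2 t u Mc by simp_all
    note c = c1 c2
    have "(t \<otimes> u \<otimes> s') \<otimes> (a \<otimes> s'') = (t \<otimes> (a \<otimes> s')) \<otimes> (u \<otimes> s'')"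
      using c cc by algebra
    also have "\<dots> = (t \<otimes> (a' \<otimes> s)) \<otimes> (u \<otimes> s'')" by (simp only: e1)
    also have "\<dots> = (u \<otimes> (a' \<otimes> s'')) \<otimes> (t \<otimes> s)" using c cc by algebra
    also have "\<dots> = (u \<otimes> (a'' \<otimes> s')) \<otimes> (t \<otimes> s)" by (simp only: e2)
    also have "\<dots> = (t \<otimes> u \<otimes> s') \<otimes> (a'' \<otimes> s)" using c cc by algebra
    finally have e: "(t \<otimes> u \<otimes> s') \<otimes> (a \<otimes> s'') = (t \<otimes> u \<otimes> s') \<otimes> (a'' \<otimes> s)" .
    have w: "t \<otimes> u \<otimes> s' \<in> M" using M_mult[OF M_mult[OF t(1) u(1)] c1(4)] .
    show "(x,z) \<in> loc_rel R M" unfolding xyz rel_iff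
      using c1 c2 w e by blast
  qed
qed

lemma frac_eq_iff: "a \<in> carrier R \<Longrightarrow> a' \<in> carrier R \<Longrightarrow> s \<in> M \<Longrightarrow> s' \<in> M \<Longrightarrow>
   frac R M a s = frac R M a' s' \<longleftrightarrow> (\<exists>t\<in>M. t \<otimes> (a \<otimes> s') = t \<otimes> (a' \<otimes> s))"
  unfolding frac_def
  by (subst eq_equiv_class_iff[OF rel_equiv]) (simp_all add: rel_iff)

lemma frac_eqI: "a \<in> carrier R \<Longrightarrow> a' \<in> carrier R \<Longrightarrow> s \<in> M \<Longrightarrow> s' \<in> M \<Longrightarrow>
   a \<otimes> s' = a' \<otimes> s \<Longrightarrow> frac R M a s = frac R M a' s'"
proof -
  assume c: "a \<in> carrier R" "a' \<in> carrier R" "s \<in> M" "s' \<in> M" and e: "a \<otimes> s' = a' \<otimes> s"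
  have "\<one> \<otimes> (a \<otimes> s') = \<one> \<otimes> (a' \<otimes> s)" by (simp only: e)
  then show ?thesis unfolding frac_eq_iff[OF c] using M_one by blast
qed

lemma frac_self: "a \<in> carrier R \<Longrightarrow> s \<in> M \<Longrightarrow> (a,s) \<in> frac R M a s"
  unfolding frac_def by (rule equiv_class_self[OF rel_equiv]) simp

lemma mem_frac: "p \<in> frac R M a s \<Longrightarrow> a \<in> carrier R \<Longrightarrow> s \<in> M \<Longrightarrow>
   frac R M (fst p) (snd p) = frac R M a s \<and> fst p \<in> carrier R \<and> snd p \<in> M"
proof -
  assume p: "p \<in> frac R M a s" and c: "a \<in> carrier R" "s \<in> M"
  obtain a' s' where pp: "p = (a',s')" by (cases p)
  have r: "((a,s),(a',s')) \<in> loc_rel R M" using p unfolding frac_def pp by simp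
  then have c': "a' \<in> carrier R" "s' \<in> M" unfolding rel_iff by blast+
  have "frac R M a s = frac R M a' s'" unfolding frac_def
    using r c c' by (simp add: eq_equiv_class_iff[OF rel_equiv])
  then show ?thesis using pp c' by simp
qed

lemma frac_cancel: "a \<in> carrier R \<Longrightarrow> s \<in> M \<Longrightarrow> u \<in> M \<Longrightarrow> frac R M (a \<otimes> u) (s \<otimes> u) = frac R M a s"
proof -
  assume c: "a \<in> carrier R" "s \<in> M" "u \<in> M"
  then have cc: "s \<in> carrier R" "u \<in> carrier R" using Mc by auto
  have e: "a \<otimes> u \<otimes> s = a \<otimes> (s \<otimes> u)" using c cc by algebra
  show ?thesis by (rule frac_eqI[OF m_closed[OF c(1) cc(2)] c(1) M_mult[OF c(2) c(3)] c(2) e])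
qed

end


context locm begin
lemma mult_compat:
  assumes c: "a \<in> carrier R" "a' \<in> carrier R" "c \<in> carrier R" "c' \<in> carrier R"
     "s \<in> M" "s' \<in> M" "t \<in> M" "t' \<in> M"
   and e: "frac R M a s = frac R M a' s'" "frac R M c t = frac R M c' t'"
  shows "frac R M (a \<otimes> c) (s \<otimes> t) = frac R M (a' \<otimes> c') (s' \<otimes> t')"
proof -
  obtain u where u: "u \<in> M" "u \<otimes> (a \<otimes> s') = u \<otimes> (a' \<otimes> s)"
    using e(1) unfolding frac_eq_iff[OF c(1,2,5,6)] by blast
  obtain v where v: "v \<in> M" "v \<otimes> (c \<otimes> t') = v \<otimes> (c' \<otimes> t)"
    using e(2) unfolding frac_eq_iff[OF c(3,4,7,8)] by blast
  have cc: "s \<in> carrier R" "s' \<in> carrier R" "t \<in> carrier R" "t' \<in> carrier R" "u \<in> carrier R" "v \<in> carrier R"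
    using c u v Mc by auto
  have "(u \<otimes> v) \<otimes> ((a \<otimes> c) \<otimes> (s' \<otimes> t')) = (u \<otimes> (a \<otimes> s')) \<otimes> (v \<otimes> (c \<otimes> t'))"
    using c cc by algebra
  also have "\<dots> = (u \<otimes> (a' \<otimes> s)) \<otimes> (v \<otimes> (c' \<otimes> t))" by (simp only: u(2) v(2))
  also have "\<dots> = (u \<otimes> v) \<otimes> ((a' \<otimes> c') \<otimes> (s \<otimes> t))" using c cc by algebra
  finally have eq: "(u \<otimes> v) \<otimes> ((a \<otimes> c) \<otimes> (s' \<otimes> t')) = (u \<otimes> v) \<otimes> ((a' \<otimes> c') \<otimes> (s \<otimes> t))" .
  have uv: "u \<otimes> v \<in> M" using M_mult[OF u(1) v(1)] .
  have cl: "a \<otimes> c \<in> carrier R" "a' \<otimes> c' \<in> carrier R" "s \<otimes> t \<in> M" "s' \<otimes> t' \<in> M"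
    using c by (simp_all add: M_mult)
  have ex: "\<exists>w\<in>M. w \<otimes> ((a \<otimes> c) \<otimes> (s' \<otimes> t')) = w \<otimes> ((a' \<otimes> c') \<otimes> (s \<otimes> t))"
    using uv eq by blast
  show ?thesis using ex by (simp only: frac_eq_iff[OF cl])
qed

lemma add_compat:
  assumes c: "a \<in> carrier R" "a' \<in> carrier R" "c \<in> carrier R" "c' \<in> carrier R"
     "s \<in> M" "s' \<in> M" "t \<in> M" "t' \<in> M"
   and e: "frac R M a s = frac R M a' s'" "frac R M c t = frac R M c' t'"
  shows "frac R M ((a \<otimes> t) \<oplus> (c \<otimes> s)) (s \<otimes> t) = frac R M ((a' \<otimes> t') \<oplus> (c' \<otimes> s')) (s' \<otimes> t')"
proof -
  obtain u where u: "u \<in> M" "u \<otimes> (a \<otimes> s') = u \<otimes> (a' \<otimes> s)"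
    using e(1) unfolding frac_eq_iff[OF c(1,2,5,6)] by blast
  obtain v where v: "v \<in> M" "v \<otimes> (c \<otimes> t') = v \<otimes> (c' \<otimes> t)"
    using e(2) unfolding frac_eq_iff[OF c(3,4,7,8)] by blast
  have cc: "s \<in> carrier R" "s' \<in> carrier R" "t \<in> carrier R" "t' \<in> carrier R" "u \<in> carrier R" "v \<in> carrier R"
    using c u v Mc by auto
  have "(u \<otimes> v) \<otimes> (((a \<otimes> t) \<oplus> (c \<otimes> s)) \<otimes> (s' \<otimes> t')) =
      (u \<otimes> (a \<otimes> s')) \<otimes> (v \<otimes> t \<otimes> t') \<oplus> (v \<otimes> (c \<otimes> t')) \<otimes> (u \<otimes> s \<otimes> s')"
    using c cc by algebra
  also have "\<dots> = (u \<otimes> (a' \<otimes> s)) \<otimes> (v \<otimes> t \<otimes> t') \<oplus> (v \<otimes> (c' \<otimes> t)) \<otimes> (u \<otimes> s \<otimes> s')"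
    by (simp only: u(2) v(2))
  also have "\<dots> = (u \<otimes> v) \<otimes> (((a' \<otimes> t') \<oplus> (c' \<otimes> s')) \<otimes> (s \<otimes> t))" using c cc by algebra
  finally have eq: "(u \<otimes> v) \<otimes> (((a \<otimes> t) \<oplus> (c \<otimes> s)) \<otimes> (s' \<otimes> t')) = (u \<otimes> v) \<otimes> (((a' \<otimes> t') \<oplus> (c' \<otimes> s')) \<otimes> (s \<otimes> t))" .
  have uv: "u \<otimes> v \<in> M" using M_mult[OF u(1) v(1)] .
  have cl: "(a \<otimes> t) \<oplus> (c \<otimes> s) \<in> carrier R" "(a' \<otimes> t') \<oplus> (c' \<otimes> s') \<in> carrier R" "s \<otimes> t \<in> M" "s' \<otimes> t' \<in> M"
    using c cc by (simp_all add: M_mult)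
  have ex: "\<exists>w\<in>M. w \<otimes> (((a \<otimes> t) \<oplus> (c \<otimes> s)) \<otimes> (s' \<otimes> t')) = w \<otimes> (((a' \<otimes> t') \<oplus> (c' \<otimes> s')) \<otimes> (s \<otimes> t))"
    using uv eq by blast
  show ?thesis using ex by (simp only: frac_eq_iff[OF cl])
qed

lemma Union_const: "(\<And>X. X \<in> A \<Longrightarrow> X = B) \<Longrightarrow> A \<noteq> {} \<Longrightarrow> \<Union>A = B"
  by auto

lemma L_carrier: "carrier (loc_ring R M) = {frac R M a s | a s. a \<in> carrier R \<and> s \<in> M}"
  by (simp add: loc_ring_def)
lemma L_zero: "\<zero>\<^bsub>loc_ring R M\<^esub> = frac R M \<zero> \<one>" by (simp add: loc_ring_def)
lemma L_one: "\<one>\<^bsub>loc_ring R M\<^esub> = frac R M \<one> \<one>" by (simp add: loc_ring_def)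

lemma frac_in_L: "a \<in> carrier R \<Longrightarrow> s \<in> M \<Longrightarrow> frac R M a s \<in> carrier (loc_ring R M)"
  by (auto simp: L_carrier)

lemma L_carrierE: assumes "X \<in> carrier (loc_ring R M)"
  obtains a s where "X = frac R M a s" "a \<in> carrier R" "s \<in> M"
  using assms by (auto simp: L_carrier)

lemma mult_frac: assumes c: "a \<in> carrier R" "c \<in> carrier R" "s \<in> M" "t \<in> M"
  shows "frac R M a s \<otimes>\<^bsub>loc_ring R M\<^esub> frac R M c t = frac R M (a \<otimes> c) (s \<otimes> t)"
proof -
  have "\<Union>{frac R M (fst p \<otimes> fst q) (snd p \<otimes> snd q) | p q. p \<in> frac R M a s \<and> q \<in> frac R M c t}
     = frac R M (a \<otimes> c) (s \<otimes> t)"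
  proof (rule Union_const)
    fix X assume "X \<in> {frac R M (fst p \<otimes> fst q) (snd p \<otimes> snd q) | p q. p \<in> frac R M a s \<and> q \<in> frac R M c t}"
    then obtain p q where X: "X = frac R M (fst p \<otimes> fst q) (snd p \<otimes> snd q)"
      and p: "p \<in> frac R M a s" and q: "q \<in> frac R M c t" by blast
    from mem_frac[OF p c(1,3)] mem_frac[OF q c(2,4)] show "X = frac R M (a \<otimes> c) (s \<otimes> t)"
      unfolding X using mult_compat[OF _ c(1) _ c(2) _ c(3) _ c(4)] c by metis
  next
    show "{frac R M (fst p \<otimes> fst q) (snd p \<otimes> snd q) | p q. p \<in> frac R M a s \<and> q \<in> frac R M c t} \<noteq> {}"
      using frac_self c by blast
  qed
  then show ?thesis by (simp add: loc_ring_def)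
qed

lemma add_frac: assumes c: "a \<in> carrier R" "c \<in> carrier R" "s \<in> M" "t \<in> M"
  shows "frac R M a s \<oplus>\<^bsub>loc_ring R M\<^esub> frac R M c t = frac R M ((a \<otimes> t) \<oplus> (c \<otimes> s)) (s \<otimes> t)"
proof -
  have "\<Union>{frac R M ((fst p \<otimes> snd q) \<oplus> (fst q \<otimes> snd p)) (snd p \<otimes> snd q) | p q. p \<in> frac R M a s \<and> q \<in> frac R M c t}
     = frac R M ((a \<otimes> t) \<oplus> (c \<otimes> s)) (s \<otimes> t)"
  proof (rule Union_const)
    fix X assume "X \<in> {frac R M ((fst p \<otimes> snd q) \<oplus> (fst q \<otimes> snd p)) (snd p \<otimes> snd q) | p q. p \<in> frac R M a s \<and> q \<in> frac R M c t}"
    then obtain p q where X: "X = frac R M ((fst p \<otimes> snd q) \<oplus> (fst q \<otimes> snd p)) (snd p \<otimes> snd q)"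
      and p: "p \<in> frac R M a s" and q: "q \<in> frac R M c t" by blast
    from mem_frac[OF p c(1,3)] mem_frac[OF q c(2,4)] show "X = frac R M ((a \<otimes> t) \<oplus> (c \<otimes> s)) (s \<otimes> t)"
      unfolding X using add_compat[OF _ c(1) _ c(2) _ c(3) _ c(4)] c by metis
  next
    show "{frac R M ((fst p \<otimes> snd q) \<oplus> (fst q \<otimes> snd p)) (snd p \<otimes> snd q) | p q. p \<in> frac R M a s \<and> q \<in> frac R M c t} \<noteq> {}"
      using frac_self c by blast
  qed
  then show ?thesis by (simp add: loc_ring_def)
qed


lemma Mcl: "s \<in> M \<Longrightarrow> t \<in> M \<Longrightarrow> s \<otimes> t \<in> M" by (rule M_mult)

lemma L_cring: "cring (loc_ring R M)"
proof (rule cringI)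
  show "abelian_group (loc_ring R M)"
  proof (rule abelian_groupI)
    fix x y assume x: "x \<in> carrier (loc_ring R M)" and y: "y \<in> carrier (loc_ring R M)"
    obtain a s where xa: "x = frac R M a s" "a \<in> carrier R" "s \<in> M" using x by (rule L_carrierE)
    obtain c t where yc: "y = frac R M c t" "c \<in> carrier R" "t \<in> M" using y by (rule L_carrierE)
    have cc: "s \<in> carrier R" "t \<in> carrier R" using xa yc Mc by auto
    show "x \<oplus>\<^bsub>loc_ring R M\<^esub> y \<in> carrier (loc_ring R M)"
      unfolding xa yc add_frac[OF xa(2) yc(2) xa(3) yc(3)]
      by (rule frac_in_L) (use xa yc cc Mcl in simp_all)
    show "x \<oplus>\<^bsub>loc_ring R M\<^esub> y = y \<oplus>\<^bsub>loc_ring R M\<^esub> x"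
      unfolding xa yc add_frac[OF xa(2) yc(2) xa(3) yc(3)] add_frac[OF yc(2) xa(2) yc(3) xa(3)]
      by (rule frac_eqI) (use xa yc cc Mcl in simp_all, (use xa yc cc in algebra)?)
  next
    show "\<zero>\<^bsub>loc_ring R M\<^esub> \<in> carrier (loc_ring R M)"
      unfolding L_zero by (rule frac_in_L) (simp_all add: M_one)
  next
    fix x y z assume x: "x \<in> carrier (loc_ring R M)" and y: "y \<in> carrier (loc_ring R M)"
      and z: "z \<in> carrier (loc_ring R M)"
    obtain a s where xa: "x = frac R M a s" "a \<in> carrier R" "s \<in> M" using x by (rule L_carrierE)
    obtain c t where yc: "y = frac R M c t" "c \<in> carrier R" "t \<in> M" using y by (rule L_carrierE)
    obtain e u where ze: "z = frac R M e u" "e \<in> carrier R" "u \<in> M" using z by (rule L_carrierE)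
    have cc: "s \<in> carrier R" "t \<in> carrier R" "u \<in> carrier R" using xa yc ze Mc by auto
    have c1: "a \<otimes> t \<oplus> c \<otimes> s \<in> carrier R" "s \<otimes> t \<in> M" "c \<otimes> u \<oplus> e \<otimes> t \<in> carrier R" "t \<otimes> u \<in> M"
      using xa yc ze cc Mcl by simp_all
    show "x \<oplus>\<^bsub>loc_ring R M\<^esub> y \<oplus>\<^bsub>loc_ring R M\<^esub> z = x \<oplus>\<^bsub>loc_ring R M\<^esub> (y \<oplus>\<^bsub>loc_ring R M\<^esub> z)"
      unfolding xa yc ze add_frac[OF xa(2) yc(2) xa(3) yc(3)] add_frac[OF yc(2) ze(2) yc(3) ze(3)]
        add_frac[OF c1(1) ze(2) c1(2) ze(3)] add_frac[OF xa(2) c1(3) xa(3) c1(4)]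
      by (rule frac_eqI) (use xa yc ze cc Mcl in simp_all, (use xa yc ze cc in algebra)?)
  next
    fix x assume x: "x \<in> carrier (loc_ring R M)"
    obtain a s where xa: "x = frac R M a s" "a \<in> carrier R" "s \<in> M" using x by (rule L_carrierE)
    have cc: "s \<in> carrier R" using xa Mc by auto
    show "\<zero>\<^bsub>loc_ring R M\<^esub> \<oplus>\<^bsub>loc_ring R M\<^esub> x = x"
      unfolding xa L_zero add_frac[OF zero_closed xa(2) M_one xa(3)]
      by (rule frac_eqI) (use xa cc M_one Mcl in simp_all, (use xa cc in algebra)?)
    have na: "\<ominus> a \<in> carrier R" using xa by simp
    have "frac R M (\<ominus> a) s \<oplus>\<^bsub>loc_ring R M\<^esub> x = \<zero>\<^bsub>loc_ring R M\<^esub>"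
      unfolding xa L_zero add_frac[OF na xa(2) xa(3) xa(3)]
      by (rule frac_eqI) (use xa cc M_one Mcl in simp_all, (use xa cc in algebra)?)
    moreover have "frac R M (\<ominus> a) s \<in> carrier (loc_ring R M)" using na xa by (rule_tac frac_in_L) simp_all
    ultimately show "\<exists>y\<in>carrier (loc_ring R M). y \<oplus>\<^bsub>loc_ring R M\<^esub> x = \<zero>\<^bsub>loc_ring R M\<^esub>" by blast
  qed
next
  show "comm_monoid (loc_ring R M)"
  proof (rule comm_monoidI)
    fix x y assume x: "x \<in> carrier (loc_ring R M)" and y: "y \<in> carrier (loc_ring R M)"
    obtain a s where xa: "x = frac R M a s" "a \<in> carrier R" "s \<in> M" using x by (rule L_carrierE)
    obtain c t where yc: "y = frac R M c t" "c \<in> carrier R" "t \<in> M" using y by (rule L_carrierE)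
    have cc: "s \<in> carrier R" "t \<in> carrier R" using xa yc Mc by auto
    show "x \<otimes>\<^bsub>loc_ring R M\<^esub> y \<in> carrier (loc_ring R M)"
      unfolding xa yc mult_frac[OF xa(2) yc(2) xa(3) yc(3)]
      by (rule frac_in_L) (use xa yc cc Mcl in simp_all)
    show "x \<otimes>\<^bsub>loc_ring R M\<^esub> y = y \<otimes>\<^bsub>loc_ring R M\<^esub> x"
      unfolding xa yc mult_frac[OF xa(2) yc(2) xa(3) yc(3)] mult_frac[OF yc(2) xa(2) yc(3) xa(3)]
      by (rule frac_eqI) (use xa yc cc Mcl in simp_all, (use xa yc cc in algebra)?)
  next
    show "\<one>\<^bsub>loc_ring R M\<^esub> \<in> carrier (loc_ring R M)"
      unfolding L_one by (rule frac_in_L) (simp_all add: M_one)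
  next
    fix x y z assume x: "x \<in> carrier (loc_ring R M)" and y: "y \<in> carrier (loc_ring R M)"
      and z: "z \<in> carrier (loc_ring R M)"
    obtain a s where xa: "x = frac R M a s" "a \<in> carrier R" "s \<in> M" using x by (rule L_carrierE)
    obtain c t where yc: "y = frac R M c t" "c \<in> carrier R" "t \<in> M" using y by (rule L_carrierE)
    obtain e u where ze: "z = frac R M e u" "e \<in> carrier R" "u \<in> M" using z by (rule L_carrierE)
    have cc: "s \<in> carrier R" "t \<in> carrier R" "u \<in> carrier R" using xa yc ze Mc by auto
    have c1: "a \<otimes> c \<in> carrier R" "s \<otimes> t \<in> M" "c \<otimes> e \<in> carrier R" "t \<otimes> u \<in> M"
      using xa yc ze cc Mcl by simp_all
    show "x \<otimes>\<^bsub>loc_ring R M\<^esub> y \<otimes>\<^bsub>loc_ring R M\<^esub> z = x \<otimes>\<^bsub>loc_ring R M\<^esub> (y \<otimes>\<^bsub>loc_ring R M\<^esub> z)"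
      unfolding xa yc ze mult_frac[OF xa(2) yc(2) xa(3) yc(3)] mult_frac[OF yc(2) ze(2) yc(3) ze(3)]
        mult_frac[OF c1(1) ze(2) c1(2) ze(3)] mult_frac[OF xa(2) c1(3) xa(3) c1(4)]
      by (rule frac_eqI) (use xa yc ze cc Mcl in simp_all, (use xa yc ze cc in algebra)?)
  next
    fix x assume x: "x \<in> carrier (loc_ring R M)"
    obtain a s where xa: "x = frac R M a s" "a \<in> carrier R" "s \<in> M" using x by (rule L_carrierE)
    have cc: "s \<in> carrier R" using xa Mc by auto
    show "\<one>\<^bsub>loc_ring R M\<^esub> \<otimes>\<^bsub>loc_ring R M\<^esub> x = x"
      unfolding xa L_one mult_frac[OF one_closed xa(2) M_one xa(3)]
      by (rule frac_eqI) (use xa cc M_one Mcl in simp_all, (use xa cc in algebra)?)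
  qed
next
  fix x y z assume x: "x \<in> carrier (loc_ring R M)" and y: "y \<in> carrier (loc_ring R M)"
    and z: "z \<in> carrier (loc_ring R M)"
  obtain a s where xa: "x = frac R M a s" "a \<in> carrier R" "s \<in> M" using x by (rule L_carrierE)
  obtain c t where yc: "y = frac R M c t" "c \<in> carrier R" "t \<in> M" using y by (rule L_carrierE)
  obtain e u where ze: "z = frac R M e u" "e \<in> carrier R" "u \<in> M" using z by (rule L_carrierE)
  have cc: "s \<in> carrier R" "t \<in> carrier R" "u \<in> carrier R" using xa yc ze Mc by auto
  have c1: "a \<otimes> t \<oplus> c \<otimes> s \<in> carrier R" "s \<otimes> t \<in> M" "a \<otimes> e \<in> carrier R" "s \<otimes> u \<in> M"
     "c \<otimes> e \<in> carrier R" "t \<otimes> u \<in> M"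
    using xa yc ze cc Mcl by simp_all
  show "(x \<oplus>\<^bsub>loc_ring R M\<^esub> y) \<otimes>\<^bsub>loc_ring R M\<^esub> z = x \<otimes>\<^bsub>loc_ring R M\<^esub> z \<oplus>\<^bsub>loc_ring R M\<^esub> y \<otimes>\<^bsub>loc_ring R M\<^esub> z"
    unfolding xa yc ze add_frac[OF xa(2) yc(2) xa(3) yc(3)] mult_frac[OF c1(1) ze(2) c1(2) ze(3)]
      mult_frac[OF xa(2) ze(2) xa(3) ze(3)] mult_frac[OF yc(2) ze(2) yc(3) ze(3)] add_frac[OF c1(3) c1(5) c1(4) c1(6)]
    by (rule frac_eqI) (use xa yc ze cc Mcl in simp_all, (use xa yc ze cc in algebra)?)
qed

end



lemma pow_upd: "x [^]\<^bsub>L\<lparr>carrier := K\<rparr>\<^esub> (n::nat) = x [^]\<^bsub>L\<^esub> n"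
  by (simp add: nat_pow_def)

lemma finsum_sub:
  assumes L: "ring L" and K: "subring K L" and A: "finite A" and f: "f \<in> A \<rightarrow> K"
  shows "finsum (L\<lparr>carrier := K\<rparr>) f A = finsum L f A"
  using A f
proof (induction A rule: finite_induct)
  case empty
  interpret L: ring L by (rule L)
  interpret K: ring "L\<lparr>carrier := K\<rparr>" using L.subring_iff[OF subringE(1)[OF K]] K by simp
  show ?case by simp
next
  case (insert j A)
  interpret L: ring L by (rule L)
  interpret K: ring "L\<lparr>carrier := K\<rparr>" using L.subring_iff[OF subringE(1)[OF K]] K by simp
  have sub: "K \<subseteq> carrier L" using subringE(1)[OF K] .
  have fA: "f \<in> A \<rightarrow> K" "f j \<in> K" using insert by auto
  have "finsum (L\<lparr>carrier := K\<rparr>) f (insert j A) = f j \<oplus>\<^bsub>L\<^esub> finsum (L\<lparr>carrier := K\<rparr>) f A"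
    using K.finsum_insert[OF insert(1,2)] fA by simp
  also have "\<dots> = f j \<oplus>\<^bsub>L\<^esub> finsum L f A" using insert fA by simp
  also have "\<dots> = finsum L f (insert j A)"
  proof -
    have fL: "f \<in> A \<rightarrow> carrier L" "f j \<in> carrier L" using fA sub by auto
    show ?thesis using L.finsum_insert[OF insert(1,2) fL] by simp
  qed
  finally show ?case .
qed

context locm begin

lemma M_pow: "s \<in> M \<Longrightarrow> s [^] (k::nat) \<in> M"
  by (induct k) (simp_all add: M_one M_mult)

lemma pow_frac: assumes "a \<in> carrier R" "s \<in> M"
  shows "frac R M a s [^]\<^bsub>loc_ring R M\<^esub> (k::nat) = frac R M (a [^] k) (s [^] k)"
proof (induct k)
  case 0
  interpret L: cring "loc_ring R M" by (rule L_cring)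
  show ?case by (simp add: L_one)
next
  case (Suc k)
  interpret L: cring "loc_ring R M" by (rule L_cring)
  have c: "a [^] k \<in> carrier R" "s [^] k \<in> M" using assms M_pow by auto
  show ?case using Suc mult_frac[OF c(1) assms(1) c(2) assms(2)] by simp
qed

lemma L_minus: assumes c: "a \<in> carrier R" "s \<in> M"
  shows "\<ominus>\<^bsub>loc_ring R M\<^esub> frac R M a s = frac R M (\<ominus> a) s"
proof -
  interpret L: cring "loc_ring R M" by (rule L_cring)
  have cc: "s \<in> carrier R" using c Mc by auto
  have na: "\<ominus> a \<in> carrier R" using c by simp
  have "frac R M (\<ominus> a) s \<oplus>\<^bsub>loc_ring R M\<^esub> frac R M a s = \<zero>\<^bsub>loc_ring R M\<^esub>"
    unfolding L_zero add_frac[OF na c(1) c(2) c(2)]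
    by (rule frac_eqI) (use c cc M_one Mcl in simp_all, (use c cc in algebra)?)
  then show ?thesis
    by (rule L.minus_equality) (use c na in \<open>simp_all add: frac_in_L\<close>)
qed

lemma common_denom:
  "finite A \<Longrightarrow> f \<in> A \<rightarrow> carrier (loc_ring R M) \<Longrightarrow>
    \<exists>T\<in>M. \<exists>V. \<forall>i\<in>A. V i \<in> carrier R \<and> f i = frac R M (V i) T"
proof (induction A rule: finite_induct)
  case empty
  show ?case using M_one by blast
next
  case (insert j A)
  then obtain T V where T: "T \<in> M" and V: "\<forall>i\<in>A. V i \<in> carrier R \<and> f i = frac R M (V i) T" by auto
  have "f j \<in> carrier (loc_ring R M)" using insert by auto
  then obtain u t where ut: "f j = frac R M u t" "u \<in> carrier R" "t \<in> M" by (rule L_carrierE)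
  define V' where "V' = (\<lambda>i. if i = j then u \<otimes> T else V i \<otimes> t)"
  have Tc: "T \<in> carrier R" "t \<in> carrier R" using T ut Mc by auto
  have "\<forall>i\<in>insert j A. V' i \<in> carrier R \<and> f i = frac R M (V' i) (T \<otimes> t)"
  proof
    fix i assume i: "i \<in> insert j A"
    show "V' i \<in> carrier R \<and> f i = frac R M (V' i) (T \<otimes> t)"
    proof (cases "i = j")
      case True
      have "frac R M u t = frac R M (u \<otimes> T) (T \<otimes> t)"
        by (rule frac_eqI) (use ut T Tc Mcl in simp_all, (use ut Tc in algebra)?)
      then show ?thesis using True ut Tc by (simp add: V'_def)
    next
      case False
      then have iA: "i \<in> A" using i by simp
      have "frac R M (V i) T = frac R M (V i \<otimes> t) (T \<otimes> t)"
        using frac_cancel[of "V i" T t] iA V T ut by simp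
      then show ?thesis using False iA V Tc by (simp add: V'_def)
    qed
  qed
  then show ?case using M_mult[OF T ut(3)] by blast
qed

lemma finsum_frac:
  "finite A \<Longrightarrow> V \<in> A \<rightarrow> carrier R \<Longrightarrow> T \<in> M \<Longrightarrow>
    finsum (loc_ring R M) (\<lambda>i. frac R M (V i) T) A = frac R M (finsum R V A) T"
proof (induction A rule: finite_induct)
  case empty
  interpret L: cring "loc_ring R M" by (rule L_cring)
  have Tc: "T \<in> carrier R" using empty Mc by auto
  show ?case unfolding L.finsum_empty L_zero
    by (rule frac_eqI) (use empty Tc M_one in simp_all)
next
  case (insert j A)
  interpret L: cring "loc_ring R M" by (rule L_cring)
  have Tc: "T \<in> carrier R" using insert Mc by auto
  have VA: "V \<in> A \<rightarrow> carrier R" "V j \<in> carrier R" using insert by auto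
  have sc: "finsum R V A \<in> carrier R" using VA by simp
  have "finsum (loc_ring R M) (\<lambda>i. frac R M (V i) T) (insert j A)
      = frac R M (V j) T \<oplus>\<^bsub>loc_ring R M\<^esub> finsum (loc_ring R M) (\<lambda>i. frac R M (V i) T) A"
    by (rule L.finsum_insert[OF insert(1,2)]) (use VA insert(5) in \<open>auto intro: frac_in_L\<close>)
  also have "\<dots> = frac R M (V j) T \<oplus>\<^bsub>loc_ring R M\<^esub> frac R M (finsum R V A) T"
    using insert VA by simp
  also have "\<dots> = frac R M (V j \<otimes> T \<oplus> finsum R V A \<otimes> T) (T \<otimes> T)"
    by (rule add_frac[OF VA(2) sc insert(5) insert(5)])
  also have "\<dots> = frac R M (V j \<oplus> finsum R V A) T"
    by (rule frac_eqI) (use VA sc Tc insert(5) Mcl in simp_all, (use VA sc Tc in algebra)?)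
  also have "\<dots> = frac R M (finsum R V (insert j A)) T"
    using finsum_insert[OF insert(1,2)] VA by simp
  finally show ?case .
qed

end



lemma ext_cancel: "Fin (g::'g::linordered_ab_group_add) + x = Fin g + y \<Longrightarrow> x = y"
  by (cases x; cases y) auto

lemma ext_lt:
  fixes a a' :: "'g::linordered_ab_group_add extended"
  assumes "Fin B' < a'" "a' + Fin B = a + Fin B'" "a \<noteq> Minf"
  shows "Fin B < a"
proof (cases a')
  case (Fin x')
  then obtain x where ax: "a = Fin x" using assms by (cases a) auto
  have "B' < x'" "x' + B = x + B'" using assms Fin ax by auto
  then have "B < x" by (metis add_less_cancel_left add.commute)
  then show ?thesis using ax by simp
next
  case Pinf
  then show ?thesis using assms by (cases a) auto
next
  case Minf
  then show ?thesis using assms by auto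
qed

lemma ext_contra:
  fixes x z d :: "'g::linordered_ab_group_add extended"
  assumes "x \<le> Fin B" "z \<le> Fin C" "Fin E < d" "d + (Fin B + Fin C) = x + z + Fin E"
    "x \<noteq> Minf" "z \<noteq> Minf"
  shows False
proof -
  obtain x' where x: "x = Fin x'" using assms by (cases x) auto
  obtain z' where z: "z = Fin z'" using assms by (cases z) auto
  show False
  proof (cases d)
    case (Fin d')
    have h: "x' \<le> B" "z' \<le> C" "E < d'" "d' + (B + C) = x' + z' + E" using assms x z Fin by auto
    have "x' + z' + E < B + C + d'" using h by (metis add_le_less_mono add_mono)
    then show False using h by (simp add: add.commute add.left_commute)
  next
    case Pinf then show False using assms x z by simp
  next
    case Minf then show False using assms by simp
  qed
qed


lemma ideal_pow_ideal: "cring R \<Longrightarrow> ideal I R \<Longrightarrow> ideal (ideal_pow R I k) R"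
proof (induct k)
  case 0 then show ?case by (simp add: cring.axioms(1) ring.oneideal)
next
  case (Suc k) then show ?case by (simp add: cring.axioms(1) ring.ideal_prod_is_ideal)
qed

locale bu = cring R for R :: "'a ring" (structure) +
  fixes \<nu> :: "'a \<Rightarrow> 'g::linordered_ab_group_add extended" and b :: 'a and A :: "'a set" and n :: nat
  assumes prime: "primeideal (nilrad R) R" and val: "valuation R \<nu>"
    and b: "b \<in> carrier R" "b \<notin> nilrad R" and A: "A \<subseteq> ideal_pow R (nilrad R) n" and n: "1 \<le> n"
begin

lemma Mb_locm: "locm R (powers R b)"
proof (unfold_locales)
  show "powers R b \<subseteq> carrier R" using b by (auto simp: powers_def)
  show "\<one> \<in> powers R b" unfolding powers_def
    by (rule CollectI, rule exI[of _ 0]) simp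
  fix s t assume "s \<in> powers R b" "t \<in> powers R b"
  then obtain k l where "s = b [^] (k::nat)" "t = b [^] (l::nat)" unfolding powers_def by blast
  then have "s \<otimes> t = b [^] (k + l)" using b by (simp add: nat_pow_mult)
  then show "s \<otimes> t \<in> powers R b" unfolding powers_def by blast
qed

sublocale Rb: locm R "powers R b" by (rule Mb_locm)

lemma pow_in_Mb: "b [^] (k::nat) \<in> powers R b" unfolding powers_def by blast
lemma Mb_E: "s \<in> powers R b \<Longrightarrow> \<exists>k::nat. s = b [^] k" unfolding powers_def by blast
lemma b_Mb: "b \<in> powers R b" using pow_in_Mb[of 1] b by simp

lemma nu_mult: "a \<in> carrier R \<Longrightarrow> c \<in> carrier R \<Longrightarrow> \<nu> (a \<otimes> c) = \<nu> a + \<nu> c"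
  using val unfolding valuation_def by blast
lemma nu_notMinf: "a \<in> carrier R \<Longrightarrow> \<nu> a \<noteq> Minf"
  using val unfolding valuation_def by blast
lemma nu_one: "\<nu> \<one> = 0" using val unfolding valuation_def by blast
lemma nu_zero: "\<nu> \<zero> = Pinf" using val unfolding valuation_def by blast
lemma supp_min: "minimal_prime R {a \<in> carrier R. \<nu> a = Pinf}" using val unfolding valuation_def by blast

lemma nu_nil: assumes a: "a \<in> nilrad R" shows "\<nu> a = Pinf"
proof (rule ccontr)
  assume ne: "\<nu> a \<noteq> Pinf"
  have ac: "a \<in> carrier R" using a unfolding nilrad_def by blast
  obtain k where k: "a [^] (k::nat) = \<zero>" using a unfolding nilrad_def by blast
  obtain x where x: "\<nu> a = Fin x" using ne nu_notMinf[OF ac] by (cases "\<nu> a") auto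
  have "\<exists>g. \<nu> (a [^] (m::nat)) = Fin g" for m
  proof (induct m)
    case 0 then show ?case using nu_one by (simp add: zero_extended_def)
  next
    case (Suc m)
    then obtain g where "\<nu> (a [^] m) = Fin g" by blast
    then have "\<nu> (a [^] Suc m) = Fin (g + x)" using nu_mult[of "a [^] m" a] ac x by simp
    then show ?case by blast
  qed
  then show False using k nu_zero by (metis extended.distinct(1))
qed

lemma supp_eq: "{a \<in> carrier R. \<nu> a = Pinf} = nilrad R"
proof -
  have sub: "nilrad R \<subseteq> {a \<in> carrier R. \<nu> a = Pinf}"
    using nu_nil unfolding nilrad_def by auto
  show ?thesis using supp_min prime sub unfolding minimal_prime_def by blast
qed

lemma nu_b: "\<exists>\<beta>. \<nu> b = Fin \<beta>"
proof -
  have "\<nu> b \<noteq> Pinf" using supp_eq b by blast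
  then show ?thesis using nu_notMinf[OF b(1)] by (cases "\<nu> b") auto
qed

lemma nu_bpow: "\<exists>g. \<nu> (b [^] (k::nat)) = Fin g"
proof (induct k)
  case 0 then show ?case using nu_one by (simp add: zero_extended_def)
next
  case (Suc m)
  then obtain g where "\<nu> (b [^] m) = Fin g" by blast
  moreover obtain \<beta> where "\<nu> b = Fin \<beta>" using nu_b by blast
  ultimately have "\<nu> (b [^] Suc m) = Fin (g + \<beta>)" using nu_mult[of "b [^] m" b] b by simp
  then show ?case by blast
qed

lemma nu_Mb: "s \<in> powers R b \<Longrightarrow> \<exists>g. \<nu> s = Fin g" using Mb_E nu_bpow by blast

lemma val_frac: assumes c: "a \<in> carrier R" "a' \<in> carrier R" "s \<in> powers R b" "s' \<in> powers R b"
  and e: "frac R (powers R b) a s = frac R (powers R b) a' s'"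
  shows "\<nu> a + \<nu> s' = \<nu> a' + \<nu> s"
proof -
  obtain t where t: "t \<in> powers R b" "t \<otimes> (a \<otimes> s') = t \<otimes> (a' \<otimes> s)"
    using e unfolding Rb.frac_eq_iff[OF c] by blast
  obtain g where g: "\<nu> t = Fin g" using nu_Mb[OF t(1)] by blast
  have cc: "t \<in> carrier R" "s \<in> carrier R" "s' \<in> carrier R" using c t Rb.Mc by auto
  have "Fin g + (\<nu> a + \<nu> s') = Fin g + (\<nu> a' + \<nu> s)"
    using arg_cong[OF t(2), of \<nu>] c cc g by (simp add: nu_mult)
  then show ?thesis by (rule ext_cancel)
qed

abbreviation "Rb \<equiv> loc_ring R (powers R b)"
abbreviation "Gen \<equiv> (\<lambda>x. frac R (powers R b) x \<one>) ` carrier R \<union> (\<lambda>a. frac R (powers R b) a b) ` A"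
abbreviation "R' \<equiv> blowup_R' R b A"
abbreviation "cen \<equiv> blowup_center R \<nu> b A"
abbreviation "S \<equiv> carrier R' - cen"

lemma R'_eq: "R' = Rb\<lparr>carrier := generate_ring Rb Gen\<rparr>" by (simp add: blowup_R'_def)

lemma ipow_sub: "ideal_pow R (nilrad R) k \<subseteq> carrier R"
  using ideal_pow_ideal[OF is_cring primeideal.axioms(1)[OF prime]] ideal.axioms(1) additive_subgroup.a_subset
  by blast

lemma A_sub: "A \<subseteq> carrier R" using A ipow_sub by blast

lemma Gen_sub: "Gen \<subseteq> carrier Rb"
  using A_sub Rb.M_one b_Mb by (auto intro: Rb.frac_in_L)

lemma R'_cring: "cring R'"
proof -
  interpret L: cring Rb by (rule Rb.L_cring)
  have "subring (generate_ring Rb Gen) Rb" by (rule L.generate_ring_is_subring[OF Gen_sub])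
  then have "subcring (generate_ring Rb Gen) Rb" by (rule L.subcringI')
  then show ?thesis unfolding R'_eq using L.subcring_iff[OF L.generate_ring_incl[OF Gen_sub]] by simp
qed

lemma R'_carrier: "carrier R' = generate_ring Rb Gen" by (simp add: R'_eq)
lemma R'_sub: "carrier R' \<subseteq> carrier Rb"
  unfolding R'_carrier using Rb.L_cring cring.axioms(1) ring.generate_ring_incl Gen_sub by blast
lemma R'_subring: "subring (carrier R') Rb"
  unfolding R'_carrier using Rb.L_cring cring.axioms(1) ring.generate_ring_is_subring Gen_sub by blast
lemma R'_mult: "x \<otimes>\<^bsub>R'\<^esub> y = x \<otimes>\<^bsub>Rb\<^esub> y" by (simp add: R'_eq)
lemma R'_add: "x \<oplus>\<^bsub>R'\<^esub> y = x \<oplus>\<^bsub>Rb\<^esub> y" by (simp add: R'_eq)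
lemma R'_one: "\<one>\<^bsub>R'\<^esub> = \<one>\<^bsub>Rb\<^esub>" by (simp add: R'_eq)
lemma R'_zero: "\<zero>\<^bsub>R'\<^esub> = \<zero>\<^bsub>Rb\<^esub>" by (simp add: R'_eq)
lemma R'_pow: "x [^]\<^bsub>R'\<^esub> (k::nat) = x [^]\<^bsub>Rb\<^esub> k" unfolding R'_eq by (rule pow_upd)

lemma cen_iff: assumes c: "a \<in> carrier R" "s \<in> powers R b" "frac R (powers R b) a s \<in> carrier R'"
  shows "frac R (powers R b) a s \<in> cen \<longleftrightarrow> \<nu> s < \<nu> a"
proof
  assume "frac R (powers R b) a s \<in> cen"
  then obtain a' k where a': "a' \<in> carrier R" "(a', b [^] (k::nat)) \<in> frac R (powers R b) a s"
     "\<nu> (b [^] k) < \<nu> a'" unfolding blowup_center_def by blast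
  have "frac R (powers R b) a' (b [^] k) = frac R (powers R b) a s"
    using Rb.mem_frac[OF a'(2) c(1,2)] by simp
  then have e: "\<nu> a' + \<nu> s = \<nu> a + \<nu> (b [^] k)"
    using val_frac[OF a'(1) c(1) pow_in_Mb c(2)] by simp
  obtain B where B: "\<nu> s = Fin B" using nu_Mb[OF c(2)] by blast
  obtain B' where B': "\<nu> (b [^] k) = Fin B'" using nu_bpow by blast
  show "\<nu> s < \<nu> a" unfolding B
    by (rule ext_lt[of B' "\<nu> a'"]) (use a' e B B' nu_notMinf[OF c(1)] in simp_all)
next
  assume lt: "\<nu> s < \<nu> a"
  obtain k where k: "s = b [^] (k::nat)" using Mb_E[OF c(2)] by blast
  have "(a, b [^] k) \<in> frac R (powers R b) a s" using Rb.frac_self[OF c(1,2)] k by simp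
  then show "frac R (powers R b) a s \<in> cen" unfolding blowup_center_def
    using c lt k by blast
qed

lemma S_locm: "locm R' S"
proof -
  interpret R': cring R' by (rule R'_cring)
  show ?thesis
  proof (unfold_locales)
    show "S \<subseteq> carrier R'" by blast
  next
    have o: "\<one>\<^bsub>R'\<^esub> = frac R (powers R b) \<one> \<one>" using R'_one Rb.L_one by simp
    have oc: "frac R (powers R b) \<one> \<one> \<in> carrier R'" using o R'.one_closed by simp
    have "frac R (powers R b) \<one> \<one> \<notin> cen" using cen_iff[OF one_closed Rb.M_one oc] by simp
    then show "\<one>\<^bsub>R'\<^esub> \<in> S" using o oc by simp
  next
    fix X Y assume X: "X \<in> S" and Y: "Y \<in> S"
    have XY: "X \<in> carrier Rb" "Y \<in> carrier Rb" using X Y R'_sub by auto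
    obtain a s where xa: "X = frac R (powers R b) a s" "a \<in> carrier R" "s \<in> powers R b"
      using XY(1) by (rule Rb.L_carrierE)
    obtain c t where yc: "Y = frac R (powers R b) c t" "c \<in> carrier R" "t \<in> powers R b"
      using XY(2) by (rule Rb.L_carrierE)
    have pc: "X \<otimes>\<^bsub>R'\<^esub> Y \<in> carrier R'" using X Y by simp
    have pe: "X \<otimes>\<^bsub>R'\<^esub> Y = frac R (powers R b) (a \<otimes> c) (s \<otimes> t)"
      unfolding R'_mult xa yc by (rule Rb.mult_frac[OF xa(2) yc(2) xa(3) yc(3)])
    have le1: "\<nu> a \<le> \<nu> s" using cen_iff[OF xa(2) xa(3)] X xa(1) by auto
    have le2: "\<nu> c \<le> \<nu> t" using cen_iff[OF yc(2) yc(3)] Y yc(1) by auto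
    have cc: "s \<in> carrier R" "t \<in> carrier R" using xa yc Rb.Mc by auto
    have "\<not> \<nu> (s \<otimes> t) < \<nu> (a \<otimes> c)"
      using add_mono[OF le1 le2] xa yc cc by (simp add: nu_mult not_less)
    then have "X \<otimes>\<^bsub>R'\<^esub> Y \<notin> cen"
      using cen_iff[of "a \<otimes> c" "s \<otimes> t"] xa yc pc pe Rb.M_mult by simp
    then show "X \<otimes>\<^bsub>R'\<^esub> Y \<in> S" using pc by simp
  qed
qed

sublocale R1: locm R' S by (rule S_locm)

end



context bu begin

abbreviation "Ip k \<equiv> ideal_pow R (nilrad R) k"

lemma I_ideal: "ideal (nilrad R) R" using primeideal.axioms(1)[OF prime] .
lemma Ip_ideal: "ideal (Ip k) R" by (rule ideal_pow_ideal[OF is_cring I_ideal])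
lemma Ip_c: "x \<in> Ip k \<Longrightarrow> x \<in> carrier R" using ipow_sub by blast

lemma Ip_mult: "x \<in> Ip k \<Longrightarrow> y \<in> Ip l \<Longrightarrow> x \<otimes> y \<in> Ip (k + l)"
proof (induct k arbitrary: x)
  case 0
  then show ?case using ideal.I_l_closed[OF Ip_ideal, of y l x] by simp
next
  case (Suc k)
  have x: "x \<in> ideal_prod R (nilrad R) (Ip k)" using Suc(2) by simp
  have yc: "y \<in> carrier R" by (rule Ip_c[OF Suc(3)])
  from x show ?case
  proof (induct x rule: ideal_prod.induct)
    case (prod i j)
    have ic: "i \<in> carrier R" by (rule ideal.Icarr[OF I_ideal prod(1)])
    have jc: "j \<in> carrier R" by (rule Ip_c[OF prod(2)])
    have "j \<otimes> y \<in> Ip (k + l)" using Suc(1)[OF prod(2) Suc(3)] .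
    then have "i \<otimes> (j \<otimes> y) \<in> ideal_prod R (nilrad R) (Ip (k + l))" using prod(1) by (rule_tac ideal_prod.prod)
    then show ?case using ic jc yc by (simp add: m_assoc)
  next
    case (sum s1 s2)
    have c: "s1 \<in> carrier R" "s2 \<in> carrier R"
      using sum(1,3) ideal_prod_in_carrier[OF I_ideal Ip_ideal] by (simp_all add: subset_iff)
    have "s1 \<otimes> y \<oplus> s2 \<otimes> y \<in> ideal_prod R (nilrad R) (Ip (k + l))"
      using sum(2,4) by (simp add: ideal_prod.sum)
    then show ?case using c yc by (simp add: l_distr)
  qed
qed

lemma Ip_Suc: "Ip (Suc k) \<subseteq> Ip k"
  using ideal_prod_inter[OF I_ideal Ip_ideal] by simp

lemma Ip_anti: "j \<le> k \<Longrightarrow> Ip k \<subseteq> Ip j"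
proof (induct k)
  case 0 then show ?case by simp
next
  case (Suc k)
  then show ?case using Ip_Suc[of k] by (cases "j = Suc k") auto
qed

lemma Ip1: "Ip 1 = nilrad R"
proof
  show "Ip 1 \<subseteq> nilrad R" using ideal_prod_inter[OF I_ideal oneideal] by simp
  show "nilrad R \<subseteq> Ip 1"
  proof
    fix a assume a: "a \<in> nilrad R"
    then have ac: "a \<in> carrier R" by (rule ideal.Icarr[OF I_ideal])
    have "a \<otimes> \<one> \<in> ideal_prod R (nilrad R) (carrier R)" using a by (rule_tac ideal_prod.prod) simp_all
    then show "a \<in> Ip 1" using ac by simp
  qed
qed

lemma Ip_nil: "1 \<le> k \<Longrightarrow> Ip k \<subseteq> nilrad R" using Ip_anti[of 1 k] Ip1 by simp

lemma prime_pow: "x \<in> carrier R \<Longrightarrow> x [^] (m::nat) \<in> nilrad R \<Longrightarrow> x \<in> nilrad R"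
proof (induct m)
  case 0
  then have "nilrad R = carrier R" using ideal.one_imp_carrier[OF I_ideal] by simp
  then show ?case using primeideal.I_notcarr[OF prime] by simp
next
  case (Suc m)
  have "x [^] m \<otimes> x \<in> nilrad R" using Suc by simp
  then have "x [^] m \<in> nilrad R \<or> x \<in> nilrad R" using primeideal.I_prime[OF prime] Suc(2) by simp
  then show ?case using Suc by blast
qed

lemma bpow_notI: "b [^] (k::nat) \<notin> nilrad R" using prime_pow b by blast
lemma Mb_notI: "t \<in> powers R b \<Longrightarrow> t \<notin> nilrad R" using Mb_E bpow_notI by blast

definition F :: "nat \<Rightarrow> ('a \<times> 'a) set set" where
  "F k = {X. \<exists>z e. z \<in> Ip k \<and> X = frac R (powers R b) z (b [^] (e::nat))}"

lemma F_mem: "z \<in> Ip k \<Longrightarrow> s \<in> powers R b \<Longrightarrow> frac R (powers R b) z s \<in> F k"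
  unfolding F_def using Mb_E by blast

lemma F_E: assumes "X \<in> F k" obtains z e where "z \<in> Ip k" "X = frac R (powers R b) z (b [^] (e::nat))"
  using assms unfolding F_def by blast

lemma F_sub: "F k \<subseteq> carrier Rb"
  using Ip_c pow_in_Mb by (auto simp: F_def intro!: Rb.frac_in_L)

lemma F_add: assumes "X \<in> F k" "Y \<in> F k" shows "X \<oplus>\<^bsub>Rb\<^esub> Y \<in> F k"
proof -
  obtain z e where X: "z \<in> Ip k" "X = frac R (powers R b) z (b [^] (e::nat))" using assms(1) by (rule F_E)
  obtain z' e' where Y: "z' \<in> Ip k" "Y = frac R (powers R b) z' (b [^] (e'::nat))" using assms(2) by (rule F_E)
  have "X \<oplus>\<^bsub>Rb\<^esub> Y = frac R (powers R b) (z \<otimes> b [^] e' \<oplus> z' \<otimes> b [^] e) (b [^] e \<otimes> b [^] e')"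
    unfolding X Y by (rule Rb.add_frac[OF Ip_c[OF X(1)] Ip_c[OF Y(1)] pow_in_Mb pow_in_Mb])
  moreover have "z \<otimes> b [^] e' \<oplus> z' \<otimes> b [^] e \<in> Ip k"
  proof -
    have "z \<otimes> b [^] e' \<in> Ip k" by (rule ideal.I_r_closed[OF Ip_ideal X(1)]) (use b in simp)
    moreover have "z' \<otimes> b [^] e \<in> Ip k" by (rule ideal.I_r_closed[OF Ip_ideal Y(1)]) (use b in simp)
    ultimately show ?thesis by (rule additive_subgroup.a_closed[OF ideal.axioms(1)[OF Ip_ideal]])
  qed
  moreover have "b [^] e \<otimes> b [^] e' \<in> powers R b" by (rule Rb.M_mult[OF pow_in_Mb pow_in_Mb])
  ultimately show ?thesis using F_mem by metis
qed

lemma F_mult: assumes "X \<in> F k" "Y \<in> F l" shows "X \<otimes>\<^bsub>Rb\<^esub> Y \<in> F (k + l)"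
proof -
  obtain z e where X: "z \<in> Ip k" "X = frac R (powers R b) z (b [^] (e::nat))" using assms(1) by (rule F_E)
  obtain z' e' where Y: "z' \<in> Ip l" "Y = frac R (powers R b) z' (b [^] (e'::nat))" using assms(2) by (rule F_E)
  have "X \<otimes>\<^bsub>Rb\<^esub> Y = frac R (powers R b) (z \<otimes> z') (b [^] e \<otimes> b [^] e')"
    unfolding X Y by (rule Rb.mult_frac[OF Ip_c[OF X(1)] Ip_c[OF Y(1)] pow_in_Mb pow_in_Mb])
  moreover have "z \<otimes> z' \<in> Ip (k + l)" by (rule Ip_mult[OF X(1) Y(1)])
  moreover have "b [^] e \<otimes> b [^] e' \<in> powers R b" by (rule Rb.M_mult[OF pow_in_Mb pow_in_Mb])
  ultimately show ?thesis using F_mem by metis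
qed

lemma F0: "carrier Rb \<subseteq> F 0"
proof
  fix X assume "X \<in> carrier Rb"
  then obtain a s where "X = frac R (powers R b) a s" "a \<in> carrier R" "s \<in> powers R b" by (rule Rb.L_carrierE)
  then show "X \<in> F 0" using F_mem[of a 0 s] by simp
qed

lemma F_anti: "j \<le> k \<Longrightarrow> F k \<subseteq> F j"
proof -
  assume jj: "j \<le> k"
  show ?thesis
  proof
    fix X assume X: "X \<in> F k"
    obtain z e where Xz: "z \<in> Ip k" "X = frac R (powers R b) z (b [^] (e::nat))" using X by (rule F_E)
    have "z \<in> Ip j" using Ip_anti[OF jj] Xz(1) by (rule subsetD)
    then show "X \<in> F j" unfolding Xz(2) by (rule F_mem[OF _ pow_in_Mb])
  qed
qed

lemma F_multc: "X \<in> F k \<Longrightarrow> Y \<in> carrier Rb \<Longrightarrow> X \<otimes>\<^bsub>Rb\<^esub> Y \<in> F k"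
  using F_mult[of X k Y 0] F0 by auto

lemma F_cmult: "X \<in> F k \<Longrightarrow> Y \<in> carrier Rb \<Longrightarrow> Y \<otimes>\<^bsub>Rb\<^esub> X \<in> F k"
  using F_mult[of Y 0 X k] F0 by auto

lemma F_zero: "\<zero>\<^bsub>Rb\<^esub> \<in> F k"
  unfolding Rb.L_zero using Rb.M_one additive_subgroup.zero_closed[OF ideal.axioms(1)[OF Ip_ideal]]
  by (intro F_mem) auto

lemma F_neg: assumes "X \<in> F k" shows "\<ominus>\<^bsub>Rb\<^esub> X \<in> F k"
proof -
  obtain z e where X: "z \<in> Ip k" "X = frac R (powers R b) z (b [^] (e::nat))" using assms(1) by (rule F_E)
  have "\<ominus>\<^bsub>Rb\<^esub> X = frac R (powers R b) (\<ominus> z) (b [^] e)"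
    unfolding X by (rule Rb.L_minus[OF Ip_c[OF X(1)] pow_in_Mb])
  moreover have "\<ominus> z \<in> Ip k"
    by (rule additive_subgroup.a_inv_closed[OF ideal.axioms(1)[OF Ip_ideal] X(1)])
  ultimately show ?thesis using F_mem pow_in_Mb by simp
qed

lemma F_finsum: "finite B \<Longrightarrow> f \<in> B \<rightarrow> F k \<Longrightarrow> finsum Rb f B \<in> F k"
proof (induction B rule: finite_induct)
  case empty
  interpret L: cring Rb by (rule Rb.L_cring)
  show ?case using F_zero by simp
next
  case (insert j B)
  interpret L: cring Rb by (rule Rb.L_cring)
  have fB: "f \<in> B \<rightarrow> carrier Rb" "f j \<in> carrier Rb" using insert(4) F_sub by auto
  have "finsum Rb f (insert j B) = f j \<oplus>\<^bsub>Rb\<^esub> finsum Rb f B"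
    by (rule L.finsum_insert[OF insert(1,2) fB])
  then show ?case using insert F_add by auto
qed

lemma F_nil: assumes k: "1 \<le> k" and X: "X \<in> F k" shows "\<exists>m. X [^]\<^bsub>Rb\<^esub> (m::nat) = \<zero>\<^bsub>Rb\<^esub>"
proof -
  obtain z e where Xz: "z \<in> Ip k" "X = frac R (powers R b) z (b [^] (e::nat))" using X by (rule F_E)
  have "z \<in> nilrad R" using Ip_nil[OF k] Xz(1) by (rule subsetD)
  then obtain m where m: "z [^] (m::nat) = \<zero>" and zc: "z \<in> carrier R" unfolding nilrad_def by blast
  have "X [^]\<^bsub>Rb\<^esub> m = frac R (powers R b) (z [^] m) ((b [^] e) [^] m)"
    unfolding Xz by (rule Rb.pow_frac[OF zc pow_in_Mb])
  also have "\<dots> = \<zero>\<^bsub>Rb\<^esub>" unfolding m Rb.L_zero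
    by (rule Rb.frac_eqI) (use Rb.M_pow pow_in_Mb Rb.M_one Rb.Mc in auto)
  finally show ?thesis by blast
qed

lemma nil_F1: assumes X: "X \<in> carrier Rb" and m: "X [^]\<^bsub>Rb\<^esub> (m::nat) = \<zero>\<^bsub>Rb\<^esub>" shows "X \<in> F 1"
proof -
  obtain a s where xa: "X = frac R (powers R b) a s" "a \<in> carrier R" "s \<in> powers R b"
    using X by (rule Rb.L_carrierE)
  have "frac R (powers R b) (a [^] m) (s [^] m) = frac R (powers R b) \<zero> \<one>"
    using m Rb.pow_frac[OF xa(2,3)] xa(1) Rb.L_zero by simp
  then obtain t where t: "t \<in> powers R b" "t \<otimes> (a [^] m \<otimes> \<one>) = t \<otimes> (\<zero> \<otimes> s [^] m)"
    using Rb.frac_eq_iff[of "a [^] m" \<zero> "s [^] m" \<one>] xa Rb.M_pow Rb.M_one by auto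
  have tc: "t \<in> carrier R" "s \<in> carrier R" using t xa Rb.Mc by auto
  have "t \<otimes> a [^] m = \<zero>" using t(2) tc xa by simp
  then have "t \<otimes> a [^] m \<in> nilrad R"
    using additive_subgroup.zero_closed[OF ideal.axioms(1)[OF I_ideal]] by simp
  then have "t \<in> nilrad R \<or> a [^] m \<in> nilrad R" using primeideal.I_prime[OF prime] tc xa by simp
  then have "a \<in> nilrad R" using Mb_notI[OF t(1)] prime_pow xa by blast
  then show ?thesis using F_mem[of a 1 s] Ip1 xa by simp
qed

lemma R'_H: "X \<in> carrier R' \<Longrightarrow> \<exists>a N. a \<in> carrier R \<and> N \<in> F n \<and> X = frac R (powers R b) a \<one> \<oplus>\<^bsub>Rb\<^esub> N"
proof -
  interpret L: cring Rb by (rule Rb.L_cring)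
  assume "X \<in> carrier R'"
  then have "X \<in> generate_ring Rb Gen" by (simp add: R'_carrier)
  then show ?thesis
  proof (induction X rule: generate_ring.induct)
    case one
    have "\<one>\<^bsub>Rb\<^esub> = frac R (powers R b) \<one> \<one> \<oplus>\<^bsub>Rb\<^esub> \<zero>\<^bsub>Rb\<^esub>"
      using Rb.L_one Rb.frac_in_L[OF one_closed Rb.M_one] by simp
    then show ?case using F_zero by blast
  next
    case (incl h)
    then show ?case
    proof
      assume "h \<in> (\<lambda>x. frac R (powers R b) x \<one>) ` carrier R"
      then obtain x where x: "x \<in> carrier R" "h = frac R (powers R b) x \<one>" by blast
      have "h = frac R (powers R b) x \<one> \<oplus>\<^bsub>Rb\<^esub> \<zero>\<^bsub>Rb\<^esub>"
        using x Rb.frac_in_L[OF x(1) Rb.M_one] by simp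
      then show ?case using F_zero x by blast
    next
      assume "h \<in> (\<lambda>a. frac R (powers R b) a b) ` A"
      then obtain y where y: "y \<in> A" "h = frac R (powers R b) y b" by blast
      have yI: "y \<in> Ip n" using A y(1) by (rule subsetD)
      have hF: "h \<in> F n" using F_mem[OF yI b_Mb] y by simp
      have "h = frac R (powers R b) \<zero> \<one> \<oplus>\<^bsub>Rb\<^esub> h"
        using hF F_sub Rb.L_zero by (metis L.l_zero subsetD)
      then show ?case using hF by blast
    qed
  next
    case (a_inv h)
    then obtain a N where aN: "a \<in> carrier R" "N \<in> F n" "h = frac R (powers R b) a \<one> \<oplus>\<^bsub>Rb\<^esub> N" by blast
    have pc: "frac R (powers R b) a \<one> \<in> carrier Rb" using Rb.frac_in_L[OF aN(1) Rb.M_one] .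
    have Nc: "N \<in> carrier Rb" using F_sub aN(2) by (rule subsetD)
    have "\<ominus>\<^bsub>Rb\<^esub> h = \<ominus>\<^bsub>Rb\<^esub> frac R (powers R b) a \<one> \<oplus>\<^bsub>Rb\<^esub> \<ominus>\<^bsub>Rb\<^esub> N"
      using aN(3) pc Nc by (simp add: L.minus_add)
    also have "\<dots> = frac R (powers R b) (\<ominus> a) \<one> \<oplus>\<^bsub>Rb\<^esub> \<ominus>\<^bsub>Rb\<^esub> N"
      using Rb.L_minus[OF aN(1) Rb.M_one] by simp
    finally show ?case using F_neg[OF aN(2)] aN(1) by blast
  next
    case (eng_add h1 h2)
    obtain a N where aN: "a \<in> carrier R" "N \<in> F n" "h1 = frac R (powers R b) a \<one> \<oplus>\<^bsub>Rb\<^esub> N"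
      using eng_add by blast
    obtain a' N' where aN': "a' \<in> carrier R" "N' \<in> F n" "h2 = frac R (powers R b) a' \<one> \<oplus>\<^bsub>Rb\<^esub> N'"
      using eng_add by blast
    have pc: "frac R (powers R b) a \<one> \<in> carrier Rb" "frac R (powers R b) a' \<one> \<in> carrier Rb"
      using Rb.frac_in_L[OF aN(1) Rb.M_one] Rb.frac_in_L[OF aN'(1) Rb.M_one] by auto
    have Nc: "N \<in> carrier Rb" "N' \<in> carrier Rb" using aN aN' F_sub by auto
    have "h1 \<oplus>\<^bsub>Rb\<^esub> h2 = (frac R (powers R b) a \<one> \<oplus>\<^bsub>Rb\<^esub> frac R (powers R b) a' \<one>) \<oplus>\<^bsub>Rb\<^esub> (N \<oplus>\<^bsub>Rb\<^esub> N')"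
      unfolding aN(3) aN'(3) using pc Nc by (simp add: L.a_ac)
    also have "frac R (powers R b) a \<one> \<oplus>\<^bsub>Rb\<^esub> frac R (powers R b) a' \<one> = frac R (powers R b) (a \<oplus> a') \<one>"
      using Rb.add_frac[OF aN(1) aN'(1) Rb.M_one Rb.M_one] aN aN' by simp
    finally show ?case using F_add[OF aN(2) aN'(2)] aN aN' by blast
  next
    case (eng_mult h1 h2)
    obtain a N where aN: "a \<in> carrier R" "N \<in> F n" "h1 = frac R (powers R b) a \<one> \<oplus>\<^bsub>Rb\<^esub> N"
      using eng_mult by blast
    obtain a' N' where aN': "a' \<in> carrier R" "N' \<in> F n" "h2 = frac R (powers R b) a' \<one> \<oplus>\<^bsub>Rb\<^esub> N'"
      using eng_mult by blast
    define p where "p = frac R (powers R b) a \<one>"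
    define q where "q = frac R (powers R b) a' \<one>"
    have pc: "p \<in> carrier Rb" "q \<in> carrier Rb"
      unfolding p_def q_def using Rb.frac_in_L[OF aN(1) Rb.M_one] Rb.frac_in_L[OF aN'(1) Rb.M_one] by auto
    have Nc: "N \<in> carrier Rb" "N' \<in> carrier Rb" using aN aN' F_sub by auto
    have "h1 \<otimes>\<^bsub>Rb\<^esub> h2 = p \<otimes>\<^bsub>Rb\<^esub> q \<oplus>\<^bsub>Rb\<^esub> (p \<otimes>\<^bsub>Rb\<^esub> N' \<oplus>\<^bsub>Rb\<^esub> N \<otimes>\<^bsub>Rb\<^esub> q \<oplus>\<^bsub>Rb\<^esub> N \<otimes>\<^bsub>Rb\<^esub> N')"
      unfolding aN(3) aN'(3) p_def[symmetric] q_def[symmetric] using pc Nc by algebra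
    also have "p \<otimes>\<^bsub>Rb\<^esub> q = frac R (powers R b) (a \<otimes> a') \<one>"
      unfolding p_def q_def using Rb.mult_frac[OF aN(1) aN'(1) Rb.M_one Rb.M_one] by simp
    finally have e: "h1 \<otimes>\<^bsub>Rb\<^esub> h2 = frac R (powers R b) (a \<otimes> a') \<one> \<oplus>\<^bsub>Rb\<^esub> (p \<otimes>\<^bsub>Rb\<^esub> N' \<oplus>\<^bsub>Rb\<^esub> N \<otimes>\<^bsub>Rb\<^esub> q \<oplus>\<^bsub>Rb\<^esub> N \<otimes>\<^bsub>Rb\<^esub> N')" .
    have "N \<otimes>\<^bsub>Rb\<^esub> N' \<in> F n" using F_mult[OF aN(2) aN'(2)] F_anti[of n "n + n"] by auto
    then have "p \<otimes>\<^bsub>Rb\<^esub> N' \<oplus>\<^bsub>Rb\<^esub> N \<otimes>\<^bsub>Rb\<^esub> q \<oplus>\<^bsub>Rb\<^esub> N \<otimes>\<^bsub>Rb\<^esub> N' \<in> F n"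
      using F_cmult[OF aN'(2) pc(1)] F_multc[OF aN(2) pc(2)] F_add by blast
    then show ?case using e aN aN' by blast
  qed
qed

end



context bu begin

abbreviation "R1 \<equiv> loc_ring R' S"

lemma R1_eq: "blowup_ring R \<nu> b A = R1" by (simp add: blowup_ring_def)

definition G :: "nat \<Rightarrow> (('a \<times> 'a) set \<times> ('a \<times> 'a) set) set set" where
  "G k = {frac R' S P s | P s. P \<in> carrier R' \<and> P \<in> F k \<and> s \<in> S}"

lemma G_I: "P \<in> carrier R' \<Longrightarrow> P \<in> F k \<Longrightarrow> s \<in> S \<Longrightarrow> frac R' S P s \<in> G k"
  unfolding G_def by blast

lemma G_E: assumes "X \<in> G k" obtains P s where "P \<in> carrier R'" "P \<in> F k" "s \<in> S" "X = frac R' S P s"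
  using assms unfolding G_def by blast

lemma S_R': "s \<in> S \<Longrightarrow> s \<in> carrier R'" by blast
lemma R'_Rb: "x \<in> carrier R' \<Longrightarrow> x \<in> carrier Rb" using R'_sub by (rule subsetD)

lemma G_add: assumes "X \<in> G k" "Y \<in> G k" shows "X \<oplus>\<^bsub>R1\<^esub> Y \<in> G k"
proof -
  obtain P s where X: "P \<in> carrier R'" "P \<in> F k" "s \<in> S" "X = frac R' S P s" using assms(1) by (rule G_E)
  obtain P' s' where Y: "P' \<in> carrier R'" "P' \<in> F k" "s' \<in> S" "Y = frac R' S P' s'" using assms(2) by (rule G_E)
  have e: "X \<oplus>\<^bsub>R1\<^esub> Y = frac R' S (P \<otimes>\<^bsub>R'\<^esub> s' \<oplus>\<^bsub>R'\<^esub> P' \<otimes>\<^bsub>R'\<^esub> s) (s \<otimes>\<^bsub>R'\<^esub> s')"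
    unfolding X(4) Y(4) by (rule R1.add_frac[OF X(1) Y(1) X(3) Y(3)])
  have c: "P \<otimes>\<^bsub>R'\<^esub> s' \<oplus>\<^bsub>R'\<^esub> P' \<otimes>\<^bsub>R'\<^esub> s \<in> carrier R'" using X Y by simp
  have f: "P \<otimes>\<^bsub>R'\<^esub> s' \<oplus>\<^bsub>R'\<^esub> P' \<otimes>\<^bsub>R'\<^esub> s \<in> F k"
    unfolding R'_mult R'_add
    by (rule F_add[OF F_multc[OF X(2) R'_Rb[OF S_R'[OF Y(3)]]] F_multc[OF Y(2) R'_Rb[OF S_R'[OF X(3)]]]])
  show ?thesis unfolding e by (rule G_I[OF c f R1.M_mult[OF X(3) Y(3)]])
qed

lemma G_mult: assumes "X \<in> G k" "Y \<in> G l" shows "X \<otimes>\<^bsub>R1\<^esub> Y \<in> G (k + l)"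
proof -
  obtain P s where X: "P \<in> carrier R'" "P \<in> F k" "s \<in> S" "X = frac R' S P s" using assms(1) by (rule G_E)
  obtain P' s' where Y: "P' \<in> carrier R'" "P' \<in> F l" "s' \<in> S" "Y = frac R' S P' s'" using assms(2) by (rule G_E)
  have e: "X \<otimes>\<^bsub>R1\<^esub> Y = frac R' S (P \<otimes>\<^bsub>R'\<^esub> P') (s \<otimes>\<^bsub>R'\<^esub> s')"
    unfolding X(4) Y(4) by (rule R1.mult_frac[OF X(1) Y(1) X(3) Y(3)])
  have c: "P \<otimes>\<^bsub>R'\<^esub> P' \<in> carrier R'" using X Y by simp
  have f: "P \<otimes>\<^bsub>R'\<^esub> P' \<in> F (k + l)" unfolding R'_mult by (rule F_mult[OF X(2) Y(2)])
  show ?thesis unfolding e by (rule G_I[OF c f R1.M_mult[OF X(3) Y(3)]])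
qed

lemma G0: "carrier R1 \<subseteq> G 0"
proof
  fix X assume "X \<in> carrier R1"
  then obtain P s where X: "X = frac R' S P s" "P \<in> carrier R'" "s \<in> S" by (rule R1.L_carrierE)
  have "P \<in> F 0" using F0 R'_Rb[OF X(2)] by (rule subsetD)
  then show "X \<in> G 0" unfolding X(1) by (rule G_I[OF X(2) _ X(3)])
qed

lemma zero_cen: "\<zero>\<^bsub>R'\<^esub> \<notin> S"
proof -
  have z: "\<zero>\<^bsub>R'\<^esub> = frac R (powers R b) \<zero> \<one>" using R'_zero Rb.L_zero by simp
  have zc: "frac R (powers R b) \<zero> \<one> \<in> carrier R'" using z R1.zero_closed by simp
  have "frac R (powers R b) \<zero> \<one> \<in> cen"
    using cen_iff[OF zero_closed Rb.M_one zc] nu_one nu_zero by (simp add: zero_extended_def)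
  then show ?thesis using z by simp
qed

lemma nil_G1: "nilrad R1 \<subseteq> G 1"
proof
  interpret L1: cring R1 by (rule R1.L_cring)
  fix X assume Xn: "X \<in> nilrad R1"
  then have Xc: "X \<in> carrier R1" unfolding nilrad_def by blast
  obtain m where m: "X [^]\<^bsub>R1\<^esub> (m::nat) = \<zero>\<^bsub>R1\<^esub>" using Xn unfolding nilrad_def by blast
  obtain P s where X: "X = frac R' S P s" "P \<in> carrier R'" "s \<in> S" using Xc by (rule R1.L_carrierE)
  have "frac R' S (P [^]\<^bsub>R'\<^esub> m) (s [^]\<^bsub>R'\<^esub> m) = frac R' S \<zero>\<^bsub>R'\<^esub> \<one>\<^bsub>R'\<^esub>"
    using m R1.pow_frac[OF X(2,3)] X(1) R1.L_zero by simp
  then obtain t where t: "t \<in> S" "t \<otimes>\<^bsub>R'\<^esub> (P [^]\<^bsub>R'\<^esub> m \<otimes>\<^bsub>R'\<^esub> \<one>\<^bsub>R'\<^esub>) = t \<otimes>\<^bsub>R'\<^esub> (\<zero>\<^bsub>R'\<^esub> \<otimes>\<^bsub>R'\<^esub> s [^]\<^bsub>R'\<^esub> m)"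
    using R1.frac_eq_iff[of "P [^]\<^bsub>R'\<^esub> m" "\<zero>\<^bsub>R'\<^esub>" "s [^]\<^bsub>R'\<^esub> m" "\<one>\<^bsub>R'\<^esub>"] X R1.M_pow R1.M_one by auto
  have tc: "t \<in> carrier R'" "s \<in> carrier R'" using t X by auto
  have tz: "t \<otimes>\<^bsub>R'\<^esub> P [^]\<^bsub>R'\<^esub> m = \<zero>\<^bsub>R'\<^esub>" using t(2) tc X by simp
  show "X \<in> G 1"
  proof (cases m)
    case 0
    then have "t = \<zero>\<^bsub>R'\<^esub>" using tz tc by simp
    then show ?thesis using t zero_cen by simp
  next
    case (Suc m')
    have "(t \<otimes>\<^bsub>R'\<^esub> P) [^]\<^bsub>R'\<^esub> m = t [^]\<^bsub>R'\<^esub> m' \<otimes>\<^bsub>R'\<^esub> (t \<otimes>\<^bsub>R'\<^esub> P [^]\<^bsub>R'\<^esub> m)"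
      using tc X Suc by (simp add: R1.nat_pow_distrib R1.m_ac)
    also have "\<dots> = \<zero>\<^bsub>R'\<^esub>" using tz tc by simp
    finally have "(t \<otimes>\<^bsub>R'\<^esub> P) [^]\<^bsub>Rb\<^esub> m = \<zero>\<^bsub>Rb\<^esub>" by (simp add: R'_pow R'_zero)
    moreover have tP: "t \<otimes>\<^bsub>R'\<^esub> P \<in> carrier R'" using tc X by simp
    ultimately have F1: "t \<otimes>\<^bsub>R'\<^esub> P \<in> F 1" using nil_F1 R'_Rb by blast
    have "X = frac R' S (t \<otimes>\<^bsub>R'\<^esub> P) (t \<otimes>\<^bsub>R'\<^esub> s)"
      using R1.frac_cancel[OF X(2) X(3) t(1)] X(1) tc X(2) by (simp add: R1.m_comm)
    then show ?thesis using G_I[OF tP F1 R1.M_mult[OF t(1) X(3)]] by simp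
  qed
qed

lemma ipow_G: "ideal_pow R1 (nilrad R1) k \<subseteq> G k"
proof (induct k)
  case 0 then show ?case using G0 by simp
next
  case (Suc k)
  show ?case
  proof
    fix x assume "x \<in> ideal_pow R1 (nilrad R1) (Suc k)"
    then have "x \<in> ideal_prod R1 (nilrad R1) (ideal_pow R1 (nilrad R1) k)" by simp
    then show "x \<in> G (Suc k)"
    proof (induct x rule: ideal_prod.induct)
      case (prod i j)
      have "i \<in> G 1" using nil_G1 prod(1) by (rule subsetD)
      moreover have "j \<in> G k" using Suc prod(2) by (rule subsetD)
      ultimately show ?case using G_mult by fastforce
    next
      case (sum s1 s2) then show ?case using G_add by blast
    qed
  qed
qed

end



context bu begin

lemma R'_finsum: "finite B \<Longrightarrow> g \<in> B \<rightarrow> carrier R' \<Longrightarrow> finsum R' g B = finsum Rb g B"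
proof -
  assume B: "finite B" and g: "g \<in> B \<rightarrow> carrier R'"
  have sr: "subring (generate_ring Rb Gen) Rb" using R'_subring by (simp add: R'_carrier)
  have "finsum (Rb\<lparr>carrier := generate_ring Rb Gen\<rparr>) g B = finsum Rb g B"
    by (rule finsum_sub[OF cring.axioms(1)[OF Rb.L_cring] sr B]) (use g in \<open>simp add: R'_carrier\<close>)
  then show ?thesis by (simp add: R'_eq)
qed

lemma final:
  fixes y :: "nat \<Rightarrow> 'a" and r :: nat
  assumes yA: "\<forall>i<r. y i \<in> A"
    and indep: "\<forall>c \<in> {..<r} \<rightarrow> carrier R.
                   (\<Oplus>\<^bsub>R\<^esub>i\<in>{..<r}. c i \<otimes>\<^bsub>R\<^esub> y i) \<in> ideal_pow R (nilrad R) (Suc n)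
                   \<longrightarrow> (\<forall>i < r. c i \<in> nilrad R)"
    and c: "c \<in> {..<r} \<rightarrow> carrier R1"
    and hyp: "(\<Oplus>\<^bsub>R1\<^esub>i\<in>{..<r}. c i \<otimes>\<^bsub>R1\<^esub> blowup_quot R \<nu> b A (y i))
             \<in> ideal_pow R1 (nilrad R1) (Suc n)"
  shows "\<forall>i < r. c i \<in> nilrad R1"
proof -
  interpret L1: cring R1 by (rule R1.L_cring)
  interpret L: cring Rb by (rule Rb.L_cring)
  obtain T V where T: "T \<in> S" and V: "\<forall>i\<in>{..<r}. V i \<in> carrier R' \<and> c i = frac R' S (V i) T"
    using R1.common_denom[OF finite_lessThan c] by blast
  define Yq where "Yq i = frac R (powers R b) (y i) b" for i
  have Yq_c: "Yq i \<in> carrier R'" if i: "i < r" for i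
  proof -
    have "Yq i \<in> Gen" using yA i unfolding Yq_def by blast
    then show ?thesis unfolding R'_carrier by (rule generate_ring.incl)
  qed
  have Yq_F: "Yq i \<in> F n" if i: "i < r" for i
    unfolding Yq_def using A yA i by (intro F_mem[OF _ b_Mb]) blast
  have Tc: "T \<in> carrier R'" using T by blast
  have Vc: "V i \<in> carrier R'" if "i < r" for i using V that by simp
  have tm: "c i \<otimes>\<^bsub>R1\<^esub> blowup_quot R \<nu> b A (y i) = frac R' S (V i \<otimes>\<^bsub>R'\<^esub> Yq i) T" if i: "i < r" for i
  proof -
    have "c i \<otimes>\<^bsub>R1\<^esub> blowup_quot R \<nu> b A (y i) = frac R' S (V i) T \<otimes>\<^bsub>R1\<^esub> frac R' S (Yq i) \<one>\<^bsub>R'\<^esub>"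
      using V i by (simp add: blowup_quot_def Yq_def)
    also have "\<dots> = frac R' S (V i \<otimes>\<^bsub>R'\<^esub> Yq i) (T \<otimes>\<^bsub>R'\<^esub> \<one>\<^bsub>R'\<^esub>)"
      by (rule R1.mult_frac[OF Vc[OF i] Yq_c[OF i] T R1.M_one])
    finally show ?thesis using Tc by simp
  qed
  define W where "W = finsum R' (\<lambda>i. V i \<otimes>\<^bsub>R'\<^esub> Yq i) {..<r}"
  have VYc: "(\<lambda>i. V i \<otimes>\<^bsub>R'\<^esub> Yq i) \<in> {..<r} \<rightarrow> carrier R'" using Vc Yq_c by simp
  have Wc: "W \<in> carrier R'" unfolding W_def using VYc by simp
  have "(\<Oplus>\<^bsub>R1\<^esub>i\<in>{..<r}. c i \<otimes>\<^bsub>R1\<^esub> blowup_quot R \<nu> b A (y i))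
      = (\<Oplus>\<^bsub>R1\<^esub>i\<in>{..<r}. frac R' S (V i \<otimes>\<^bsub>R'\<^esub> Yq i) T)"
  proof (rule L1.finsum_cong')
    show "(\<lambda>i. frac R' S (V i \<otimes>\<^bsub>R'\<^esub> Yq i) T) \<in> {..<r} \<rightarrow> carrier R1"
    proof
      fix i assume "i \<in> {..<r}"
      then have "V i \<otimes>\<^bsub>R'\<^esub> Yq i \<in> carrier R'" using VYc by blast
      then show "frac R' S (V i \<otimes>\<^bsub>R'\<^esub> Yq i) T \<in> carrier R1" by (rule R1.frac_in_L[OF _ T])
    qed
  qed (use tm in auto)
  also have "\<dots> = frac R' S W T" unfolding W_def by (rule R1.finsum_frac[OF finite_lessThan VYc T])
  finally have e1: "(\<Oplus>\<^bsub>R1\<^esub>i\<in>{..<r}. c i \<otimes>\<^bsub>R1\<^esub> blowup_quot R \<nu> b A (y i)) = frac R' S W T" .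
  have "frac R' S W T \<in> ideal_pow R1 (nilrad R1) (Suc n)" using hyp unfolding e1 .
  then have "frac R' S W T \<in> G (Suc n)" by (rule subsetD[OF ipow_G])
  then obtain P s where P: "P \<in> carrier R'" "P \<in> F (Suc n)" "s \<in> S" "frac R' S W T = frac R' S P s"
    by (rule G_E) simp
  obtain t where t: "t \<in> S" "t \<otimes>\<^bsub>R'\<^esub> (W \<otimes>\<^bsub>R'\<^esub> s) = t \<otimes>\<^bsub>R'\<^esub> (P \<otimes>\<^bsub>R'\<^esub> T)"
    using P(4) unfolding R1.frac_eq_iff[OF Wc P(1) T P(3)] by blast
  define w where "w = t \<otimes>\<^bsub>R'\<^esub> s"
  have wS: "w \<in> S" unfolding w_def by (rule R1.M_mult[OF t(1) P(3)])
  have wc: "w \<in> carrier R'" using wS by blast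
  have tc: "t \<in> carrier R'" "s \<in> carrier R'" using t P by auto
  have "w \<otimes>\<^bsub>R'\<^esub> W = t \<otimes>\<^bsub>R'\<^esub> (W \<otimes>\<^bsub>R'\<^esub> s)" unfolding w_def using tc Wc by (simp add: R1.m_ac)
  also have "\<dots> = t \<otimes>\<^bsub>R'\<^esub> (P \<otimes>\<^bsub>R'\<^esub> T)" by (rule t(2))
  finally have wWe: "w \<otimes>\<^bsub>R'\<^esub> W = t \<otimes>\<^bsub>R'\<^esub> (P \<otimes>\<^bsub>R'\<^esub> T)" .
  have wWF: "w \<otimes>\<^bsub>R'\<^esub> W \<in> F (Suc n)"
    unfolding wWe unfolding R'_mult by (rule F_cmult[OF F_multc[OF P(2) R'_Rb[OF Tc]] R'_Rb[OF tc(1)]])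
  have wVc: "w \<otimes>\<^bsub>R'\<^esub> V i \<in> carrier R'" if "i < r" for i using wc Vc that by simp
  have "w \<otimes>\<^bsub>R'\<^esub> W = finsum R' (\<lambda>i. w \<otimes>\<^bsub>R'\<^esub> (V i \<otimes>\<^bsub>R'\<^esub> Yq i)) {..<r}"
    unfolding W_def by (rule R1.finsum_rdistr[OF finite_lessThan wc VYc])
  also have "\<dots> = finsum R' (\<lambda>i. (w \<otimes>\<^bsub>R'\<^esub> V i) \<otimes>\<^bsub>R'\<^esub> Yq i) {..<r}"
    by (rule R1.finsum_cong') (use wc Vc Yq_c in \<open>auto simp: R1.m_assoc\<close>)
  also have "\<dots> = finsum Rb (\<lambda>i. (w \<otimes>\<^bsub>R'\<^esub> V i) \<otimes>\<^bsub>R'\<^esub> Yq i) {..<r}"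
    by (rule R'_finsum[OF finite_lessThan]) (use wVc Yq_c in simp)
  finally have wWsum: "w \<otimes>\<^bsub>R'\<^esub> W = finsum Rb (\<lambda>i. (w \<otimes>\<^bsub>R'\<^esub> V i) \<otimes>\<^bsub>Rb\<^esub> Yq i) {..<r}"
    by (simp add: R'_mult)
  have "\<forall>i\<in>{..<r}. \<exists>p. fst p \<in> carrier R \<and> snd p \<in> F n \<and>
      w \<otimes>\<^bsub>R'\<^esub> V i = frac R (powers R b) (fst p) \<one> \<oplus>\<^bsub>Rb\<^esub> snd p"
  proof
    fix i assume "i \<in> {..<r}"
    then have ir: "i < r" by simp
    obtain a N where "a \<in> carrier R" "N \<in> F n" "w \<otimes>\<^bsub>R'\<^esub> V i = frac R (powers R b) a \<one> \<oplus>\<^bsub>Rb\<^esub> N"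
      using R'_H[OF wVc[OF ir]] by blast
    then show "\<exists>p. fst p \<in> carrier R \<and> snd p \<in> F n \<and>
      w \<otimes>\<^bsub>R'\<^esub> V i = frac R (powers R b) (fst p) \<one> \<oplus>\<^bsub>Rb\<^esub> snd p"
      by (intro exI[of _ "(a, N)"]) simp
  qed
  then obtain f where f: "\<forall>i\<in>{..<r}. fst (f i) \<in> carrier R \<and> snd (f i) \<in> F n \<and>
      w \<otimes>\<^bsub>R'\<^esub> V i = frac R (powers R b) (fst (f i)) \<one> \<oplus>\<^bsub>Rb\<^esub> snd (f i)"
    by (metis bchoice)
  define aa where "aa i = fst (f i)" for i
  define NN where "NN i = snd (f i)" for i
  have aa: "aa i \<in> carrier R" "NN i \<in> F n"
    "w \<otimes>\<^bsub>R'\<^esub> V i = frac R (powers R b) (aa i) \<one> \<oplus>\<^bsub>Rb\<^esub> NN i" if "i < r" for i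
    using f that unfolding aa_def NN_def by auto
  have NNc: "NN i \<in> carrier Rb" if "i < r" for i using F_sub aa(2)[OF that] by (rule subsetD)
  have yc: "y i \<in> carrier R" if "i < r" for i using A_sub yA that by blast
  have NYF: "NN i \<otimes>\<^bsub>Rb\<^esub> Yq i \<in> F (Suc n)" if "i < r" for i
    using F_mult[OF aa(2)[OF that] Yq_F[OF that]] F_anti[of "Suc n" "n + n"] n by auto
  define NS where "NS = finsum Rb (\<lambda>i. NN i \<otimes>\<^bsub>Rb\<^esub> Yq i) {..<r}"
  have NSF: "NS \<in> F (Suc n)" unfolding NS_def by (rule F_finsum[OF finite_lessThan]) (use NYF in simp)
  have NSc: "NS \<in> carrier Rb" using F_sub NSF by (rule subsetD)
  define Sg where "Sg = finsum R (\<lambda>i. aa i \<otimes> y i) {..<r}"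
  have Sgc: "Sg \<in> carrier R" unfolding Sg_def using aa(1) yc by simp
  have Z1: "(\<lambda>i. frac R (powers R b) (aa i \<otimes> y i) b) \<in> {..<r} \<rightarrow> carrier Rb"
    using aa(1) yc b_Mb by (auto intro!: Rb.frac_in_L)
  have Z2: "(\<lambda>i. NN i \<otimes>\<^bsub>Rb\<^esub> Yq i) \<in> {..<r} \<rightarrow> carrier Rb"
    using NNc Yq_c R'_Rb by auto
  have term2: "(w \<otimes>\<^bsub>R'\<^esub> V i) \<otimes>\<^bsub>Rb\<^esub> Yq i = frac R (powers R b) (aa i \<otimes> y i) b \<oplus>\<^bsub>Rb\<^esub> NN i \<otimes>\<^bsub>Rb\<^esub> Yq i"
    if i: "i < r" for i
  proof -
    have p1: "frac R (powers R b) (aa i) \<one> \<in> carrier Rb" using aa(1)[OF i] Rb.M_one by (rule Rb.frac_in_L)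
    have "(w \<otimes>\<^bsub>R'\<^esub> V i) \<otimes>\<^bsub>Rb\<^esub> Yq i = frac R (powers R b) (aa i) \<one> \<otimes>\<^bsub>Rb\<^esub> Yq i \<oplus>\<^bsub>Rb\<^esub> NN i \<otimes>\<^bsub>Rb\<^esub> Yq i"
      unfolding aa(3)[OF i] using p1 NNc[OF i] R'_Rb[OF Yq_c[OF i]] by (simp add: L.l_distr)
    also have "frac R (powers R b) (aa i) \<one> \<otimes>\<^bsub>Rb\<^esub> Yq i = frac R (powers R b) (aa i \<otimes> y i) (\<one> \<otimes> b)"
      unfolding Yq_def by (rule Rb.mult_frac[OF aa(1)[OF i] yc[OF i] Rb.M_one b_Mb])
    finally show ?thesis using b by simp
  qed
  have "w \<otimes>\<^bsub>R'\<^esub> W = finsum Rb (\<lambda>i. frac R (powers R b) (aa i \<otimes> y i) b \<oplus>\<^bsub>Rb\<^esub> NN i \<otimes>\<^bsub>Rb\<^esub> Yq i) {..<r}"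
    unfolding wWsum by (rule L.finsum_cong') (use term2 Z1 Z2 in auto)
  also have "\<dots> = finsum Rb (\<lambda>i. frac R (powers R b) (aa i \<otimes> y i) b) {..<r} \<oplus>\<^bsub>Rb\<^esub> NS"
    unfolding NS_def by (rule L.finsum_addf[OF Z1 Z2])
  also have "finsum Rb (\<lambda>i. frac R (powers R b) (aa i \<otimes> y i) b) {..<r} = frac R (powers R b) Sg b"
    unfolding Sg_def by (rule Rb.finsum_frac[OF finite_lessThan _ b_Mb]) (use aa(1) yc in simp)
  finally have wWe2: "w \<otimes>\<^bsub>R'\<^esub> W = frac R (powers R b) Sg b \<oplus>\<^bsub>Rb\<^esub> NS" .
  have Zc: "frac R (powers R b) Sg b \<in> carrier Rb" using Sgc b_Mb by (rule Rb.frac_in_L)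
  have "frac R (powers R b) Sg b = (w \<otimes>\<^bsub>R'\<^esub> W) \<oplus>\<^bsub>Rb\<^esub> \<ominus>\<^bsub>Rb\<^esub> NS"
    unfolding wWe2 using Zc NSc by (simp add: L.a_assoc L.r_neg)
  then have ZF: "frac R (powers R b) Sg b \<in> F (Suc n)"
    using F_add[OF wWF F_neg[OF NSF]] by simp
  then obtain z e where z: "z \<in> Ip (Suc n)" "frac R (powers R b) Sg b = frac R (powers R b) z (b [^] (e::nat))"
    by (rule F_E)
  have zc: "z \<in> carrier R" using Ip_c z(1) by blast
  obtain t2 where t2: "t2 \<in> powers R b" "t2 \<otimes> (Sg \<otimes> b [^] e) = t2 \<otimes> (z \<otimes> b)"
    using z(2) unfolding Rb.frac_eq_iff[OF Sgc zc b_Mb pow_in_Mb] by blast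
  define \<beta> where "\<beta> = t2 \<otimes> b [^] e"
  have \<beta>M: "\<beta> \<in> powers R b" unfolding \<beta>_def by (rule Rb.M_mult[OF t2(1) pow_in_Mb])
  have \<beta>c: "\<beta> \<in> carrier R" using \<beta>M Rb.Mc by blast
  have t2c: "t2 \<in> carrier R" using t2 Rb.Mc by blast
  have "\<beta> \<otimes> Sg = t2 \<otimes> (Sg \<otimes> b [^] e)" unfolding \<beta>_def using t2c Sgc b by (simp add: m_ac)
  also have "\<dots> = t2 \<otimes> (z \<otimes> b)" by (rule t2(2))
  also have "\<dots> \<in> Ip (Suc n)"
    by (rule ideal.I_l_closed[OF Ip_ideal ideal.I_r_closed[OF Ip_ideal z(1) b(1)] t2c])
  finally have bS: "\<beta> \<otimes> Sg \<in> Ip (Suc n)" .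
  have "\<beta> \<otimes> Sg = finsum R (\<lambda>i. \<beta> \<otimes> (aa i \<otimes> y i)) {..<r}"
    unfolding Sg_def by (rule finsum_rdistr[OF finite_lessThan \<beta>c]) (use aa(1) yc in simp)
  also have "\<dots> = finsum R (\<lambda>i. (\<beta> \<otimes> aa i) \<otimes> y i) {..<r}"
    by (rule finsum_cong') (use aa(1) yc \<beta>c in \<open>auto simp: m_assoc\<close>)
  finally have sf: "finsum R (\<lambda>i. (\<beta> \<otimes> aa i) \<otimes> y i) {..<r} \<in> Ip (Suc n)" using bS by simp
  have cf: "(\<lambda>i. \<beta> \<otimes> aa i) \<in> {..<r} \<rightarrow> carrier R" using \<beta>c aa(1) by simp
  have "\<forall>i<r. \<beta> \<otimes> aa i \<in> nilrad R" using indep[rule_format, OF cf sf] by blast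
  then have aaI: "aa i \<in> nilrad R" if "i < r" for i
    using primeideal.I_prime[OF prime \<beta>c aa(1)[OF that]] Mb_notI[OF \<beta>M] that by blast
  show ?thesis
  proof (intro allI impI)
    fix i assume i: "i < r"
    have "frac R (powers R b) (aa i) \<one> \<in> F 1" using aaI[OF i] Ip1 Rb.M_one by (intro F_mem) auto
    moreover have "NN i \<in> F 1" using F_anti[OF n] aa(2)[OF i] by (rule subsetD)
    ultimately have "w \<otimes>\<^bsub>R'\<^esub> V i \<in> F 1" using aa(3)[OF i] F_add by simp
    then obtain m where m: "(w \<otimes>\<^bsub>R'\<^esub> V i) [^]\<^bsub>Rb\<^esub> (m::nat) = \<zero>\<^bsub>Rb\<^esub>" using F_nil by blast
    have m': "w [^]\<^bsub>R'\<^esub> m \<otimes>\<^bsub>R'\<^esub> V i [^]\<^bsub>R'\<^esub> m = \<zero>\<^bsub>R'\<^esub>"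
    proof -
      have "(w \<otimes>\<^bsub>R'\<^esub> V i) [^]\<^bsub>R'\<^esub> m = \<zero>\<^bsub>R'\<^esub>" using m by (simp only: R'_pow R'_zero)
      moreover have "(w \<otimes>\<^bsub>R'\<^esub> V i) [^]\<^bsub>R'\<^esub> m = w [^]\<^bsub>R'\<^esub> m \<otimes>\<^bsub>R'\<^esub> V i [^]\<^bsub>R'\<^esub> m"
        by (rule R1.nat_pow_distrib[OF wc Vc[OF i]])
      ultimately show ?thesis by simp
    qed
    have pc: "V i [^]\<^bsub>R'\<^esub> m \<in> carrier R'" "T [^]\<^bsub>R'\<^esub> m \<in> S" using Vc[OF i] R1.M_pow[OF T] by auto
    have "c i [^]\<^bsub>R1\<^esub> m = frac R' S (V i [^]\<^bsub>R'\<^esub> m) (T [^]\<^bsub>R'\<^esub> m)"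
      using V i R1.pow_frac[OF Vc[OF i] T] by simp
    also have "\<dots> = frac R' S \<zero>\<^bsub>R'\<^esub> \<one>\<^bsub>R'\<^esub>"
    proof -
      have "w [^]\<^bsub>R'\<^esub> m \<otimes>\<^bsub>R'\<^esub> (V i [^]\<^bsub>R'\<^esub> m \<otimes>\<^bsub>R'\<^esub> \<one>\<^bsub>R'\<^esub>) = w [^]\<^bsub>R'\<^esub> m \<otimes>\<^bsub>R'\<^esub> (\<zero>\<^bsub>R'\<^esub> \<otimes>\<^bsub>R'\<^esub> T [^]\<^bsub>R'\<^esub> m)"
        using m' pc wc Tc by simp
      then show ?thesis unfolding R1.frac_eq_iff[OF pc(1) R1.zero_closed pc(2) R1.M_one]
        using R1.M_pow[OF wS] by blast
    qed
    also have "\<dots> = \<zero>\<^bsub>R1\<^esub>" by (simp add: R1.L_zero)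
    finally show "c i \<in> nilrad R1" unfolding nilrad_def using c i by auto
  qed
qed

end

theorem mainTheorem17:
  fixes R :: "'a ring"
    and m :: "'a set"
    and \<nu> :: "'a \<Rightarrow> 'g::linordered_ab_group_add extended"
    and y :: "nat \<Rightarrow> 'a"
    and b :: 'a
    and n r s :: nat
  assumes noeth: "noetherian_ring R"
    and loc: "local_ring R m"
    and val: "valuation R \<nu>"
    and cent: "centered_on R m \<nu>"
    and ass: "ass_primes R = {nilrad R}"
    and n: "n \<ge> 1"
    and y_in: "\<forall>i < r + s. y i \<in> ideal_pow R (nilrad R) n"
    and y_gen: "\<forall>x \<in> ideal_pow R (nilrad R) n. \<exists>c \<in> {..<r + s} \<rightarrow> carrier R.
                   x \<ominus>\<^bsub>R\<^esub> (\<Oplus>\<^bsub>R\<^esub>i\<in>{..<r + s}. c i \<otimes>\<^bsub>R\<^esub> y i) \<in> ideal_pow R (nilrad R) (Suc n)"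
    and b: "b \<in> carrier R - nilrad R"
    and indep: "\<forall>c \<in> {..<r} \<rightarrow> carrier R.
                   (\<Oplus>\<^bsub>R\<^esub>i\<in>{..<r}. c i \<otimes>\<^bsub>R\<^esub> y i) \<in> ideal_pow R (nilrad R) (Suc n)
                   \<longrightarrow> (\<forall>i < r. c i \<in> nilrad R)"
  shows "\<forall>c \<in> {..<r} \<rightarrow> carrier (blowup_ring R \<nu> b (y ` {..<r})).
           (\<Oplus>\<^bsub>blowup_ring R \<nu> b (y ` {..<r})\<^esub>i\<in>{..<r}.
               c i \<otimes>\<^bsub>blowup_ring R \<nu> b (y ` {..<r})\<^esub> blowup_quot R \<nu> b (y ` {..<r}) (y i))
             \<in> ideal_pow (blowup_ring R \<nu> b (y ` {..<r})) (nilrad (blowup_ring R \<nu> b (y ` {..<r}))) (Suc n)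
           \<longrightarrow> (\<forall>i < r. c i \<in> nilrad (blowup_ring R \<nu> b (y ` {..<r})))"
proof -
  have cr: "cring R" using loc unfolding local_ring_def by blast
  have "nilrad R \<in> ass_primes R" using ass by simp
  then have pr: "primeideal (nilrad R) R" unfolding ass_primes_def by blast
  have Asub: "y ` {..<r} \<subseteq> ideal_pow R (nilrad R) n" using y_in by auto
  interpret B: bu R \<nu> b "y ` {..<r}" n
    by (intro bu.intro bu_axioms.intro) (use cr pr val b Asub n in auto)
  show ?thesis
  proof (intro ballI impI)
    fix c assume c: "c \<in> {..<r} \<rightarrow> carrier (blowup_ring R \<nu> b (y ` {..<r}))"
      and h: "(\<Oplus>\<^bsub>blowup_ring R \<nu> b (y ` {..<r})\<^esub>i\<in>{..<r}.
               c i \<otimes>\<^bsub>blowup_ring R \<nu> b (y ` {..<r})\<^esub> blowup_quot R \<nu> b (y ` {..<r}) (y i))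
             \<in> ideal_pow (blowup_ring R \<nu> b (y ` {..<r})) (nilrad (blowup_ring R \<nu> b (y ` {..<r}))) (Suc n)"
    have yA: "\<forall>i<r. y i \<in> y ` {..<r}" by simp
    show "\<forall>i<r. c i \<in> nilrad (blowup_ring R \<nu> b (y ` {..<r}))"
      using B.final[OF yA indep] c h unfolding B.R1_eq by blast
  qed
qed

end
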